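(* Let $\Omega\subset\mathbb{R}^n$ and let $h^{jk}\in C^2$ ($j,k=1,\dots,n$) be functions of $x$ with $h^{jk}=h^{kj}$. Let $u\in C^2(\mathbb{R}^{2+n};\mathbb{R})$, $\ell\in C^3(\mathbb{R}^{2+n};\mathbb{R})$ (functions of $(t,s,x)$) and $\Psi\in C^1(\mathbb{R}^n;\mathbb{R})$. Set $\theta=e^\ell$ and $v=\theta u$. Define $$A=\sum_{j,k=1}^n(h^{jk}\ell_{x_j}\ell_{x_k}-h^{jk}_{x_j}\ell_{x_k}-h^{jk}\ell_{x_jx_k})-\ell_t^2-\ell_s^2+\ell_{tt}+\ell_{ss}-\Psi,$$ $$c^{jk}=\sum_{j',k'=1}^n\big[2h^{jk'}(h^{j'k}\ell_{x_{j'}})_{x_{k'}}-(h^{jk}h^{j'k'}\ell_{x_{j'}})_{x_{k'}}\big]+h^{jk}(\ell_{tt}+\ell_{ss}-\Psi),$$ $$B=2\Big[A\Psi-(A\ell_t)_t-(A\ell_s)_s+\sum_{j,k=1}^n(Ah^{jk}\ell_{x_j})_{x_k}\Big],$$ $V=(V^1,\dots,V^n)$ with $$V^k=2\sum_{j,j',k'}h^{jk}h^{j'k'}\ell_{x_{j'}}v_{x_j}v_{x_{k'}}+\sum_jh^{jk}A\ell_{x_j}v^2-\Psi v\sum_jh^{jk}v_{x_j}-\sum_{j,j',k'}h^{jk}h^{j'k'}\ell_{x_j}v_{x_{j'}}v_{x_{k'}}-2(\ell_tv_t+\ell_sv_s)\sum_jh^{jk}v_{x_j}+\sum_jh^{jk}\ell_{x_j}(v_t^2+v_s^2),$$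 $$M=\ell_t\Big(v_t^2-v_s^2+\sum_{j,k}h^{jk}v_{x_j}v_{x_k}\Big)-2\sum_{j,k}h^{jk}\ell_{x_j}v_{x_k}v_t+2\ell_sv_sv_t+\Psi vv_t-A\ell_tv^2,$$ $$N=\ell_s\Big(v_s^2-v_t^2+\sum_{j,k}h^{jk}v_{x_j}v_{x_k}\Big)-2\sum_{j,k}h^{jk}\ell_{x_j}v_{x_k}v_s+2\ell_tv_sv_t+\Psi vv_s-A\ell_sv^2.$$ Then, pointwise, $$\theta^2\Big|u_{tt}+u_{ss}-\sum_{j,k}(h^{jk}u_{x_j})_{x_k}\Big|^2+2\,\mathrm{div}\,V+2\partial_tM+2\partial_sN\ge 2\Big[\ell_{tt}-\ell_{ss}+\sum_{j,k}(h^{jk}\ell_{x_j})_{x_k}+\Psi\Big]v_t^2-8\sum_{j,k}h^{jk}\ell_{tx_j}v_{x_k}v_t+8\ell_{st}v_sv_t-8\sum_{j,k}h^{jk}\ell_{sx_j}v_{x_k}v_s+2\Big[\ell_{ss}-\ell_{tt}+\sum_{j,k}(h^{jk}\ell_{x_j})_{x_k}+\Psi\Big]v_s^2+2\sum_{j,k}c^{jk}v_{x_j}v_{x_k}-2\sum_{j,k}h^{jk}\Psi_{x_j}vv_{x_k}+Bv^2,$$ where $\mathrm{div}\,V=\sum_{k=1}^n\partial_{x_k}V^k$.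
   Context: Subscripts $t,s,x_j$ denote partial derivatives. The inequality holds at every point where all quantities are defined. *)

theory Defs
  imports "HOL-Analysis.Analysis"
begin

text \<open>Points of R^{2+n} are triples (t, s, x) with x :: real^'n.\<close>
type_synonym 'n pt = "real \<times> real \<times> (real^'n)"

definition pd :: "('a::real_normed_vector \<Rightarrow> real) \<Rightarrow> 'a \<Rightarrow> 'a \<Rightarrow> real" where
  "pd f e p = deriv (\<lambda>r. f (p + r *\<^sub>R e)) 0"

fun Ck_on :: "nat \<Rightarrow> 'a::euclidean_space set \<Rightarrow> ('a \<Rightarrow> real) \<Rightarrow> bool" where
  "Ck_on 0 S f = continuous_on S f"
| "Ck_on (Suc k) S f = ((\<forall>p\<in>S. f differentiable (at p)) \<and> (\<forall>b\<in>Basis. Ck_on k S (\<lambda>p. pd f b p)))"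

definition Dt :: "('n::finite pt \<Rightarrow> real) \<Rightarrow> 'n pt \<Rightarrow> real" where
  "Dt f = pd f (1, 0, 0)"
definition Ds :: "('n::finite pt \<Rightarrow> real) \<Rightarrow> 'n pt \<Rightarrow> real" where
  "Ds f = pd f (0, 1, 0)"
definition Dx :: "'n::finite \<Rightarrow> ('n pt \<Rightarrow> real) \<Rightarrow> 'n pt \<Rightarrow> real" where
  "Dx j f = pd f (0, 0, axis j 1)"

definition lift :: "(real^'n \<Rightarrow> real) \<Rightarrow> 'n::finite pt \<Rightarrow> real" where
  "lift g p = g (snd (snd p))"

definition coefA :: "('n::finite \<Rightarrow> 'n \<Rightarrow> real^'n \<Rightarrow> real) \<Rightarrow> (real^'n \<Rightarrow> real)
    \<Rightarrow> ('n pt \<Rightarrow> real) \<Rightarrow> 'n pt \<Rightarrow> real" where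
  "coefA h \<Psi> l p =
     (\<Sum>j\<in>UNIV. \<Sum>k\<in>UNIV. lift (h j k) p * Dx j l p * Dx k l p
        - Dx j (lift (h j k)) p * Dx k l p - lift (h j k) p * Dx k (Dx j l) p)
     - (Dt l p)\<^sup>2 - (Ds l p)\<^sup>2 + Dt (Dt l) p + Ds (Ds l) p - lift \<Psi> p"

definition coefc :: "('n::finite \<Rightarrow> 'n \<Rightarrow> real^'n \<Rightarrow> real) \<Rightarrow> (real^'n \<Rightarrow> real)
    \<Rightarrow> ('n pt \<Rightarrow> real) \<Rightarrow> 'n \<Rightarrow> 'n \<Rightarrow> 'n pt \<Rightarrow> real" where
  "coefc h \<Psi> l j k p =
     (\<Sum>j'\<in>UNIV. \<Sum>k'\<in>UNIV.
        2 * lift (h j k') p * Dx k' (\<lambda>q. lift (h j' k) q * Dx j' l q) p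
        - Dx k' (\<lambda>q. lift (h j k) q * lift (h j' k') q * Dx j' l q) p)
     + lift (h j k) p * (Dt (Dt l) p + Ds (Ds l) p - lift \<Psi> p)"

definition coefB :: "('n::finite \<Rightarrow> 'n \<Rightarrow> real^'n \<Rightarrow> real) \<Rightarrow> (real^'n \<Rightarrow> real)
    \<Rightarrow> ('n pt \<Rightarrow> real) \<Rightarrow> 'n pt \<Rightarrow> real" where
  "coefB h \<Psi> l p = 2 * (coefA h \<Psi> l p * lift \<Psi> p
     - Dt (\<lambda>q. coefA h \<Psi> l q * Dt l q) p
     - Ds (\<lambda>q. coefA h \<Psi> l q * Ds l q) p
     + (\<Sum>j\<in>UNIV. \<Sum>k\<in>UNIV. Dx k (\<lambda>q. coefA h \<Psi> l q * lift (h j k) q * Dx j l q) p))"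

definition fieldV :: "('n::finite \<Rightarrow> 'n \<Rightarrow> real^'n \<Rightarrow> real) \<Rightarrow> (real^'n \<Rightarrow> real)
    \<Rightarrow> ('n pt \<Rightarrow> real) \<Rightarrow> ('n pt \<Rightarrow> real) \<Rightarrow> 'n \<Rightarrow> 'n pt \<Rightarrow> real" where
  "fieldV h \<Psi> l v k p =
     2 * (\<Sum>j\<in>UNIV. \<Sum>j'\<in>UNIV. \<Sum>k'\<in>UNIV.
            lift (h j k) p * lift (h j' k') p * Dx j' l p * Dx j v p * Dx k' v p)
     + (\<Sum>j\<in>UNIV. lift (h j k) p * coefA h \<Psi> l p * Dx j l p * (v p)\<^sup>2)
     - lift \<Psi> p * v p * (\<Sum>j\<in>UNIV. lift (h j k) p * Dx j v p)
     - (\<Sum>j\<in>UNIV. \<Sum>j'\<in>UNIV. \<Sum>k'\<in>UNIV.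
            lift (h j k) p * lift (h j' k') p * Dx j l p * Dx j' v p * Dx k' v p)
     - 2 * (Dt l p * Dt v p + Ds l p * Ds v p) * (\<Sum>j\<in>UNIV. lift (h j k) p * Dx j v p)
     + (\<Sum>j\<in>UNIV. lift (h j k) p * Dx j l p * ((Dt v p)\<^sup>2 + (Ds v p)\<^sup>2))"

definition fieldM :: "('n::finite \<Rightarrow> 'n \<Rightarrow> real^'n \<Rightarrow> real) \<Rightarrow> (real^'n \<Rightarrow> real)
    \<Rightarrow> ('n pt \<Rightarrow> real) \<Rightarrow> ('n pt \<Rightarrow> real) \<Rightarrow> 'n pt \<Rightarrow> real" where
  "fieldM h \<Psi> l v p =
     Dt l p * ((Dt v p)\<^sup>2 - (Ds v p)\<^sup>2
        + (\<Sum>j\<in>UNIV. \<Sum>k\<in>UNIV. lift (h j k) p * Dx j v p * Dx k v p))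
     - 2 * (\<Sum>j\<in>UNIV. \<Sum>k\<in>UNIV. lift (h j k) p * Dx j l p * Dx k v p * Dt v p)
     + 2 * Ds l p * Ds v p * Dt v p + lift \<Psi> p * v p * Dt v p
     - coefA h \<Psi> l p * Dt l p * (v p)\<^sup>2"

definition fieldN :: "('n::finite \<Rightarrow> 'n \<Rightarrow> real^'n \<Rightarrow> real) \<Rightarrow> (real^'n \<Rightarrow> real)
    \<Rightarrow> ('n pt \<Rightarrow> real) \<Rightarrow> ('n pt \<Rightarrow> real) \<Rightarrow> 'n pt \<Rightarrow> real" where
  "fieldN h \<Psi> l v p =
     Ds l p * ((Ds v p)\<^sup>2 - (Dt v p)\<^sup>2
        + (\<Sum>j\<in>UNIV. \<Sum>k\<in>UNIV. lift (h j k) p * Dx j v p * Dx k v p))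
     - 2 * (\<Sum>j\<in>UNIV. \<Sum>k\<in>UNIV. lift (h j k) p * Dx j l p * Dx k v p * Ds v p)
     + 2 * Dt l p * Ds v p * Dt v p + lift \<Psi> p * v p * Ds v p
     - coefA h \<Psi> l p * Ds l p * (v p)\<^sup>2"

end

theory Submission
  imports Defs
begin


lemma pd_frechet:
  fixes f :: "'a::real_normed_vector \<Rightarrow> real"
  assumes "f differentiable (at p)"
  shows "pd f d p = frechet_derivative f (at p) d"
proof -
  let ?F = "frechet_derivative f (at p)"
  have F: "(f has_derivative ?F) (at p)" using assms frechet_derivative_works by blast
  have L: "((\<lambda>r::real. p + r *\<^sub>R d) has_derivative (\<lambda>r. r *\<^sub>R d)) (at 0)"
    by (auto intro!: derivative_eq_intros)
  have F0: "(f has_derivative ?F) (at ((\<lambda>r::real. p + r *\<^sub>R d) 0))" using F by simp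
  have "((\<lambda>r. f (p + r *\<^sub>R d)) has_derivative (\<lambda>r. ?F (r *\<^sub>R d))) (at 0)"
    using has_derivative_compose[OF L F0] by (simp add: o_def)
  moreover have "(\<lambda>r. ?F (r *\<^sub>R d)) = (\<lambda>r. r * ?F d)"
    using F by (simp add: has_derivative_def linear_simps(5) )
  ultimately have "((\<lambda>r. f (p + r *\<^sub>R d)) has_real_derivative ?F d) (at 0)"
    by (simp add: has_field_derivative_def mult.commute[of _ "?F d"])
  then show ?thesis unfolding pd_def by (rule DERIV_imp_deriv)
qed




lemma pd_hasd:
  fixes f :: "'a::real_normed_vector \<Rightarrow> real"
  assumes "(f has_derivative F) (at p)"
  shows "pd f d p = F d"
  using assms pd_frechet frechet_derivative_at differentiableI by metis

lemma pd_mult: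
  fixes f g :: "'a::real_normed_vector \<Rightarrow> real"
  assumes "f differentiable (at p)" "g differentiable (at p)"
  shows "pd (\<lambda>q. f q * g q) d p = pd f d p * g p + f p * pd g d p"
proof -
  obtain F G where F: "(f has_derivative F) (at p)" and G: "(g has_derivative G) (at p)"
    using assms unfolding differentiable_def by blast
  have "((\<lambda>q. f q * g q) has_derivative (\<lambda>h. f p * G h + F h * g p)) (at p)"
    using has_derivative_mult[OF F G] by simp
  then show ?thesis using pd_hasd[OF F] pd_hasd[OF G] pd_hasd by (simp add: algebra_simps)
qed

lemma pd_add:
  fixes f g :: "'a::real_normed_vector \<Rightarrow> real"
  assumes "f differentiable (at p)" "g differentiable (at p)"
  shows "pd (\<lambda>q. f q + g q) d p = pd f d p + pd g d p"
proof -
  obtain F G where F: "(f has_derivative F) (at p)" and G: "(g has_derivative G) (at p)"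
    using assms unfolding differentiable_def by blast
  show ?thesis using has_derivative_add[OF F G] pd_hasd[OF F] pd_hasd[OF G] pd_hasd by simp
qed

lemma pd_diff:
  fixes f g :: "'a::real_normed_vector \<Rightarrow> real"
  assumes "f differentiable (at p)" "g differentiable (at p)"
  shows "pd (\<lambda>q. f q - g q) d p = pd f d p - pd g d p"
proof -
  obtain F G where F: "(f has_derivative F) (at p)" and G: "(g has_derivative G) (at p)"
    using assms unfolding differentiable_def by blast
  show ?thesis using has_derivative_diff[OF F G] pd_hasd[OF F] pd_hasd[OF G] pd_hasd by simp
qed

lemma pd_minus:
  fixes f :: "'a::real_normed_vector \<Rightarrow> real"
  assumes "f differentiable (at p)"
  shows "pd (\<lambda>q. - f q) d p = - pd f d p"
proof -
  obtain F where F: "(f has_derivative F) (at p)"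
    using assms unfolding differentiable_def by blast
  show ?thesis using has_derivative_minus[OF F] pd_hasd[OF F] pd_hasd by simp
qed

lemma pd_const: "pd (\<lambda>q. c) d p = (0::real)"
  unfolding pd_def by simp

lemma pd_sum:
  fixes f :: "'i \<Rightarrow> 'a::real_normed_vector \<Rightarrow> real"
  assumes "finite I" "\<forall>i\<in>I. f i differentiable (at p)"
  shows "pd (\<lambda>q. \<Sum>i\<in>I. f i q) d p = (\<Sum>i\<in>I. pd (f i) d p)"
proof -
  obtain F where F: "\<forall>i\<in>I. (f i has_derivative F i) (at p)"
    using assms(2) unfolding differentiable_def by metis
  have "((\<lambda>q. \<Sum>i\<in>I. f i q) has_derivative (\<lambda>h. \<Sum>i\<in>I. F i h)) (at p)"
    using has_derivative_sum[of I f F] F by blast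
  then have "pd (\<lambda>q. \<Sum>i\<in>I. f i q) d p = (\<Sum>i\<in>I. F i d)" by (rule pd_hasd)
  also have "\<dots> = (\<Sum>i\<in>I. pd (f i) d p)"
    by (intro sum.cong refl) (metis F pd_hasd)
  finally show ?thesis .
qed

lemma pd_power2:
  fixes f :: "'a::real_normed_vector \<Rightarrow> real"
  assumes "f differentiable (at p)"
  shows "pd (\<lambda>q. (f q)\<^sup>2) d p = 2 * f p * pd f d p"
  using pd_mult[OF assms assms, of d] by (simp add: power2_eq_square)

lemma pd_exp:
  fixes f :: "'a::real_normed_vector \<Rightarrow> real"
  assumes "f differentiable (at p)"
  shows "pd (\<lambda>q. exp (f q)) d p = exp (f p) * pd f d p"
proof -
  obtain F where F: "(f has_derivative F) (at p)"
    using assms unfolding differentiable_def by blast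
  have "((\<lambda>q. exp (f q)) has_derivative (\<lambda>h. exp (f p) * F h)) (at p)"
    using has_derivative_compose[OF F DERIV_exp[THEN has_field_derivative_imp_has_derivative]]
    by (simp add: o_def mult.commute)
  then show ?thesis using pd_hasd[OF F] pd_hasd by simp
qed

lemma line_deriv:
  fixes f :: "'a::real_normed_vector \<Rightarrow> real"
  assumes "f differentiable (at (x + a *\<^sub>R e))"
  shows "((\<lambda>r. f (x + r *\<^sub>R e)) has_real_derivative pd f e (x + a *\<^sub>R e)) (at a)"
proof -
  obtain F where F: "(f has_derivative F) (at (x + a *\<^sub>R e))"
    using assms unfolding differentiable_def by blast
  have L: "((\<lambda>r::real. x + r *\<^sub>R e) has_derivative (\<lambda>r. r *\<^sub>R e)) (at a)"
    by (auto intro!: derivative_eq_intros)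
  have "((\<lambda>r. f (x + r *\<^sub>R e)) has_derivative (\<lambda>r. F (r *\<^sub>R e))) (at a)"
    using has_derivative_compose[OF L F] by (simp add: o_def)
  moreover have "(\<lambda>r. F (r *\<^sub>R e)) = (\<lambda>r. F e * r)"
    using F by (simp add: has_derivative_def linear_simps(5) mult.commute)
  ultimately show ?thesis using pd_hasd[OF F]
    by (simp add: has_field_derivative_def)
qed

lemma schwarz_half:
  fixes f :: "'a::real_normed_vector \<Rightarrow> real"
  assumes d1: "\<And>q. f differentiable (at q)" and d2: "\<And>q. pd f e1 differentiable (at q)"
    and t: "0 < t"
  shows "\<exists>\<xi> \<eta>. 0 < \<xi> \<and> \<xi> < t \<and> 0 < \<eta> \<and> \<eta> < t \<and>
     f (p + t *\<^sub>R e1 + t *\<^sub>R e2) - f (p + t *\<^sub>R e1) - f (p + t *\<^sub>R e2) + f p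
       = t * t * pd (pd f e1) e2 (p + \<xi> *\<^sub>R e1 + \<eta> *\<^sub>R e2)"
proof -
  define \<phi> where "\<phi> a = f ((p + t *\<^sub>R e2) + a *\<^sub>R e1) - f (p + a *\<^sub>R e1)" for a
  have D1: "\<And>a. DERIV \<phi> a :> pd f e1 ((p + t *\<^sub>R e2) + a *\<^sub>R e1) - pd f e1 (p + a *\<^sub>R e1)"
    unfolding \<phi>_def by (intro DERIV_diff line_deriv d1)
  then obtain \<xi> where \<xi>: "0 < \<xi>" "\<xi> < t"
     "\<phi> t - \<phi> 0 = (t - 0) * (pd f e1 ((p + t *\<^sub>R e2) + \<xi> *\<^sub>R e1) - pd f e1 (p + \<xi> *\<^sub>R e1))"
    using MVT2[OF t, of \<phi> "\<lambda>a. pd f e1 ((p + t *\<^sub>R e2) + a *\<^sub>R e1) - pd f e1 (p + a *\<^sub>R e1)"] D1 by blast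
  define \<psi> where "\<psi> b = pd f e1 ((p + \<xi> *\<^sub>R e1) + b *\<^sub>R e2)" for b
  have D2: "\<And>b. DERIV \<psi> b :> pd (pd f e1) e2 ((p + \<xi> *\<^sub>R e1) + b *\<^sub>R e2)"
    unfolding \<psi>_def by (intro line_deriv d2)
  then obtain \<eta> where \<eta>: "0 < \<eta>" "\<eta> < t"
     "\<psi> t - \<psi> 0 = (t - 0) * pd (pd f e1) e2 ((p + \<xi> *\<^sub>R e1) + \<eta> *\<^sub>R e2)"
    using MVT2[OF t, of \<psi> "\<lambda>b. pd (pd f e1) e2 ((p + \<xi> *\<^sub>R e1) + b *\<^sub>R e2)"] D2 by blast
  have "f (p + t *\<^sub>R e1 + t *\<^sub>R e2) - f (p + t *\<^sub>R e1) - f (p + t *\<^sub>R e2) + f p = \<phi> t - \<phi> 0"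
    unfolding \<phi>_def by (simp add: add_ac)
  also have "\<dots> = t * (\<psi> t - \<psi> 0)"
    using \<xi>(3) unfolding \<psi>_def by (simp add: add_ac)
  also have "\<dots> = t * t * pd (pd f e1) e2 (p + \<xi> *\<^sub>R e1 + \<eta> *\<^sub>R e2)"
    using \<eta>(3) by simp
  finally show ?thesis using \<xi> \<eta> by blast
qed




lemma abs_contra:
  fixes x y a b :: real
  assumes "\<bar>x - a\<bar> < \<bar>a - b\<bar> / 2" "\<bar>y - b\<bar> < \<bar>a - b\<bar> / 2" "x = y"
  shows False
  using assms by (cases "a \<le> b"; cases "x \<le> a"; cases "x \<le> b") auto

lemma schwarz:
  fixes f :: "'a::real_normed_vector \<Rightarrow> real"
  assumes d: "\<And>q. f differentiable (at q)" "\<And>q. pd f e1 differentiable (at q)"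
     "\<And>q. pd f e2 differentiable (at q)"
    and c: "isCont (pd (pd f e1) e2) p" "isCont (pd (pd f e2) e1) p"
  shows "pd (pd f e1) e2 p = pd (pd f e2) e1 p"
proof (rule ccontr)
  let ?A = "pd (pd f e1) e2" and ?B = "pd (pd f e2) e1"
  assume ne: "?A p \<noteq> ?B p"
  define \<epsilon> where "\<epsilon> = \<bar>?A p - ?B p\<bar> / 2"
  have e: "\<epsilon> > 0" using ne unfolding \<epsilon>_def by simp
  obtain \<delta>1 where \<delta>1: "\<delta>1 > 0" "\<And>x'. dist x' p < \<delta>1 \<Longrightarrow> dist (?A x') (?A p) < \<epsilon>"
    using c(1) e unfolding continuous_at_eps_delta by blast
  obtain \<delta>2 where \<delta>2: "\<delta>2 > 0" "\<And>x'. dist x' p < \<delta>2 \<Longrightarrow> dist (?B x') (?B p) < \<epsilon>"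
    using c(2) e unfolding continuous_at_eps_delta by blast
  define K where "K = norm e1 + norm e2 + 1"
  have K: "K > 0" unfolding K_def by (simp add: add_nonneg_pos)
  define t where "t = min \<delta>1 \<delta>2 / (2 * K)"
  have t: "t > 0" unfolding t_def using K \<delta>1 \<delta>2 by simp
  have "t * K = min \<delta>1 \<delta>2 / 2" unfolding t_def using K by simp
  then have tK: "t * K < min \<delta>1 \<delta>2" using \<delta>1 \<delta>2 by linarith
  obtain \<xi> \<eta> where xe: "0 < \<xi>" "\<xi> < t" "0 < \<eta>" "\<eta> < t"
     "f (p + t *\<^sub>R e1 + t *\<^sub>R e2) - f (p + t *\<^sub>R e1) - f (p + t *\<^sub>R e2) + f p
       = t * t * ?A (p + \<xi> *\<^sub>R e1 + \<eta> *\<^sub>R e2)"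
    using schwarz_half[OF d(1) d(2) t, of p e2] by blast
  obtain \<xi>' \<eta>' where xe': "0 < \<xi>'" "\<xi>' < t" "0 < \<eta>'" "\<eta>' < t"
     "f (p + t *\<^sub>R e2 + t *\<^sub>R e1) - f (p + t *\<^sub>R e2) - f (p + t *\<^sub>R e1) + f p
       = t * t * ?B (p + \<xi>' *\<^sub>R e2 + \<eta>' *\<^sub>R e1)"
    using schwarz_half[OF d(1) d(3) t, of p e1] by blast
  have "t * t * ?A (p + \<xi> *\<^sub>R e1 + \<eta> *\<^sub>R e2) = t * t * ?B (p + \<xi>' *\<^sub>R e2 + \<eta>' *\<^sub>R e1)"
  proof -
    have "f (p + t *\<^sub>R e2 + t *\<^sub>R e1) = f (p + t *\<^sub>R e1 + t *\<^sub>R e2)" by (simp add: add_ac)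
    then show ?thesis using xe(5) xe'(5) by linarith
  qed
  then have eq: "?A (p + \<xi> *\<^sub>R e1 + \<eta> *\<^sub>R e2) = ?B (p + \<xi>' *\<^sub>R e2 + \<eta>' *\<^sub>R e1)"
    using t by simp
  have nb: "norm (a *\<^sub>R x + b *\<^sub>R y) < t * (norm x + norm y + 1)" if "0 < a" "a < t" "0 < b" "b < t" for a b and x y :: 'a
  proof -
    have "norm (a *\<^sub>R x + b *\<^sub>R y) \<le> a * norm x + b * norm y"
      using norm_triangle_ineq[of "a *\<^sub>R x" "b *\<^sub>R y"] that by simp
    also have "\<dots> \<le> t * norm x + t * norm y"
      using that by (intro add_mono mult_right_mono) auto
    also have "\<dots> < t * (norm x + norm y + 1)" using t by (simp add: algebra_simps)
    finally show ?thesis .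
  qed
  have "dist (p + \<xi> *\<^sub>R e1 + \<eta> *\<^sub>R e2) p < min \<delta>1 \<delta>2"
    using nb[OF xe(1-4), of e1 e2] tK unfolding K_def dist_norm by (simp add: add_ac)
  then have 1: "dist (?A (p + \<xi> *\<^sub>R e1 + \<eta> *\<^sub>R e2)) (?A p) < \<epsilon>" using \<delta>1 by simp
  have "dist (p + \<xi>' *\<^sub>R e2 + \<eta>' *\<^sub>R e1) p < min \<delta>1 \<delta>2"
    using nb[OF xe'(1-4), of e2 e1] tK unfolding K_def dist_norm by (simp add: add_ac)
  then have 2: "dist (?B (p + \<xi>' *\<^sub>R e2 + \<eta>' *\<^sub>R e1)) (?B p) < \<epsilon>" using \<delta>2 by simp
  show False using 1 2 eq unfolding \<epsilon>_def dist_real_def by (metis abs_contra)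
qed




lemma bil:
  fixes H :: "'n::finite \<Rightarrow> 'n \<Rightarrow> real"
  assumes Hs: "\<And>j k. H j k = H k j"
  shows "(\<Sum>m\<in>UNIV. x m * (\<Sum>j\<in>UNIV. H j m * y j)) = (\<Sum>m\<in>UNIV. y m * (\<Sum>j\<in>UNIV. H j m * x j))"
proof -
  have "(\<Sum>m\<in>UNIV. x m * (\<Sum>j\<in>UNIV. H j m * y j)) = (\<Sum>m\<in>UNIV. \<Sum>j\<in>UNIV. x m * H j m * y j)"
    by (simp add: sum_distrib_left mult.assoc)
  also have "\<dots> = (\<Sum>j\<in>UNIV. \<Sum>m\<in>UNIV. x m * H j m * y j)" by (rule sum.swap)
  also have "\<dots> = (\<Sum>j\<in>UNIV. y j * (\<Sum>m\<in>UNIV. H m j * x m))"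
    by (simp add: sum_distrib_left Hs mult_ac)
  finally show ?thesis .
qed




lemma jet0:
  fixes H vxx lxx :: "'n::finite \<Rightarrow> 'n \<Rightarrow> real" and hx :: "'n \<Rightarrow> 'n \<Rightarrow> 'n \<Rightarrow> real"
    and vx vtx vsx lx ltx lsx ax psx HV HL dLHV dVHV :: "'n \<Rightarrow> real"
    and dHVm dHLm :: "'n \<Rightarrow> 'n \<Rightarrow> real"
    and vv vt vs vtt vss vst lt ls ltt lss lst a aT aS ps LHV VHV dtVHV dtLHV dsVHV dsLHV
      I1s I2s hl ccsum bs Rt Rs Rp :: real
  assumes Hs: "\<And>j k. H j k = H k j" and Vs: "\<And>j k. vxx j k = vxx k j"
    and dHV: "\<And>k. HV k = (\<Sum>j\<in>UNIV. H j k * vx j)"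
    and dHL: "\<And>k. HL k = (\<Sum>j\<in>UNIV. H j k * lx j)"
    and ddHV: "\<And>m k. dHVm m k = (\<Sum>j\<in>UNIV. hx j m k * vx j + H j m * vxx j k)"
    and ddHL: "\<And>m k. dHLm m k = (\<Sum>j\<in>UNIV. hx j m k * lx j + H j m * lxx j k)"
    and dLHV: "LHV = (\<Sum>m\<in>UNIV. vx m * HL m)"
    and dVHV: "VHV = (\<Sum>m\<in>UNIV. vx m * HV m)"
    and ddLHV: "\<And>k. dLHV k = (\<Sum>m\<in>UNIV. vxx m k * HL m + vx m * dHLm m k)"
    and ddVHV: "\<And>k. dVHV k = (\<Sum>m\<in>UNIV. vxx m k * HV m + vx m * dHVm m k)"
    and dtV: "dtVHV = (\<Sum>m\<in>UNIV. vtx m * HV m + vx m * (\<Sum>j\<in>UNIV. H j m * vtx j))"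
    and dtL: "dtLHV = (\<Sum>m\<in>UNIV. vtx m * HL m + vx m * (\<Sum>j\<in>UNIV. H j m * ltx j))"
    and dsV: "dsVHV = (\<Sum>m\<in>UNIV. vsx m * HV m + vx m * (\<Sum>j\<in>UNIV. H j m * vsx j))"
    and dsL: "dsLHV = (\<Sum>m\<in>UNIV. vsx m * HL m + vx m * (\<Sum>j\<in>UNIV. H j m * lsx j))"
    and dI1: "I1s = (\<Sum>j\<in>UNIV. (\<Sum>k\<in>UNIV. hx j k k * vx j + H j k * vxx j k))"
    and dI2: "I2s = (\<Sum>j\<in>UNIV. (\<Sum>k\<in>UNIV. H j k * lx j * vx k))"
    and dhl: "hl = (\<Sum>j\<in>UNIV. (\<Sum>k\<in>UNIV. hx j k k * lx j + H j k * lxx j k))"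
    and dcc: "ccsum = (\<Sum>j\<in>UNIV. (\<Sum>k\<in>UNIV. ((\<Sum>j'\<in>UNIV. (\<Sum>k'\<in>UNIV. 2 * H j k' * (hx j' k k' * lx j' + H j' k * lxx j' k') - ((hx j k k' * H j' k' + H j k * hx j' k' k') * lx j' + H j k * H j' k' * lxx j' k'))) + H j k * (ltt + lss - ps)) * vx j * vx k))"
    and dbs: "bs = (\<Sum>j\<in>UNIV. (\<Sum>k\<in>UNIV. (ax k * H j k + a * hx j k k) * lx j + a * H j k * lxx j k))"
    and dRt: "Rt = (\<Sum>j\<in>UNIV. (\<Sum>k\<in>UNIV. H j k * ltx j * vx k * vt))"
    and dRs: "Rs = (\<Sum>j\<in>UNIV. (\<Sum>k\<in>UNIV. H j k * lsx j * vx k * vs))"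
    and dRp: "Rp = (\<Sum>j\<in>UNIV. (\<Sum>k\<in>UNIV. H j k * psx j * vv * vx k))"
  shows "2 * (vtt + vss - I1s - a * vv) * (- 2 * lt * vt - 2 * ls * vs + 2 * I2s - ps * vv) + 2 * (\<Sum>k\<in>UNIV. 2 * (dHVm k k * LHV) + 2 * (HV k * dLHV k) + a * (vv)\<^sup>2 * dHLm k k + (vv)\<^sup>2 * (HL k * ax k) + 2 * a * vv * (HL k * vx k) - vv * (psx k * HV k) - ps * (vx k * HV k) - ps * vv * dHVm k k - VHV * dHLm k k - HL k * dVHV k - 2 * vt * (ltx k * HV k) - 2 * lt * (vtx k * HV k) - 2 * vs * (lsx k * HV k) - 2 * ls * (vsx k * HV k) - 2 * (lt * vt + ls * vs) * dHVm k k + ((vt)\<^sup>2 + (vs)\<^sup>2) * dHLm k k + 2 * vt * (HL k * vtx k) + 2 * vs * (HL k * vsx k)) + 2 * (ltt * ((vt)\<^sup>2 - (vs)\<^sup>2 + VHV) + lt * (2 * vt * vtt - 2 * vs * vst + dtVHV) - 2 * (dtLHV * vt + LHV * vtt) + 2 * (lst * vs * vt + ls * vst * vt + ls * vs * vtt) + ps * (vt * vt + vv * vtt) - (aT * lt * (vv)\<^sup>2 + a * ltt * (vv)\<^sup>2 + a * lt * (2 * vv * vt))) + 2 * (lss * ((vs)\<^sup>2 - (vt)\<^sup>2 + VHV) + ls * (2 * vs * vss - 2 * vt * vst + dsVHV) - 2 * (dsLHV * vs + LHV * vss) + 2 * (lst * vs * vt + lt * vss * vt + lt * vs * vst) + ps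 * (vs * vs + vv * vss) - (aS * ls * (vv)\<^sup>2 + a * lss * (vv)\<^sup>2 + a * ls * (2 * vv * vs))) = 2 * (ltt - lss + hl + ps) * (vt)\<^sup>2 - 8 * Rt + 8 * lst * vs * vt - 8 * Rs + 2 * (lss - ltt + hl + ps) * (vs)\<^sup>2 + 2 * ccsum - 2 * Rp + (2 * (a * ps - (aT * lt + a * ltt) - (aS * ls + a * lss) + bs)) * (vv)\<^sup>2"
proof -
  define S1 where "S1 = (\<Sum>k\<in>UNIV. dHVm k k)"
  define S2 where "S2 = (\<Sum>k\<in>UNIV. dHLm k k)"
  define T where "T = (\<Sum>k\<in>UNIV. HL k * (\<Sum>j\<in>UNIV. HV j * vxx j k))"
  define W where "W = (\<Sum>k\<in>UNIV. HV k * (\<Sum>m\<in>UNIV. vx m * dHLm m k))"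
  define Q where "Q k = (\<Sum>j\<in>UNIV. \<Sum>m\<in>UNIV. hx j m k * vx j * vx m)" for k
  define HLQ where "HLQ = (\<Sum>k\<in>UNIV. HL k * Q k)"
  define AX where "AX = (\<Sum>k\<in>UNIV. HL k * ax k)"
  define PX where "PX = (\<Sum>k\<in>UNIV. psx k * HV k)"
  define LTX where "LTX = (\<Sum>k\<in>UNIV. ltx k * HV k)"
  define LSX where "LSX = (\<Sum>k\<in>UNIV. lsx k * HV k)"
  define VTX where "VTX = (\<Sum>k\<in>UNIV. vtx k * HV k)"
  define VSX where "VSX = (\<Sum>k\<in>UNIV. vsx k * HV k)"
  define VTL where "VTL = (\<Sum>k\<in>UNIV. HL k * vtx k)"
  define VSL where "VSL = (\<Sum>k\<in>UNIV. HL k * vsx k)"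
  have bilH: "(\<Sum>m\<in>UNIV. x m * HV m) = (\<Sum>m\<in>UNIV. vx m * (\<Sum>j\<in>UNIV. H j m * x j))" for x
    using bil[OF Hs, where x=vx and y=x] by (simp add: dHV mult.commute)
  have F1: "I1s = S1"
    unfolding dI1 S1_def ddHV by (rule sum.swap)
  have F2: "I2s = LHV"
  proof -
    have "I2s = (\<Sum>k\<in>UNIV. \<Sum>j\<in>UNIV. H j k * lx j * vx k)" unfolding dI2 by (rule sum.swap)
    also have "\<dots> = LHV" unfolding dLHV dHL by (simp add: sum_distrib_left mult_ac)
    finally show ?thesis .
  qed
  have F3: "hl = S2"
    unfolding dhl S2_def ddHL by (rule sum.swap)
  have F4: "(\<Sum>k\<in>UNIV. HL k * vx k) = LHV" unfolding dLHV by (simp add: mult.commute)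
  have F5: "(\<Sum>k\<in>UNIV. vx k * HV k) = VHV" unfolding dVHV ..
  have T': "(\<Sum>k\<in>UNIV. HV k * (\<Sum>m\<in>UNIV. vxx m k * HL m)) = T"
  proof -
    have "(\<Sum>k\<in>UNIV. HV k * (\<Sum>m\<in>UNIV. vxx m k * HL m)) = (\<Sum>k\<in>UNIV. \<Sum>m\<in>UNIV. HV k * vxx m k * HL m)"
      by (simp add: sum_distrib_left mult_ac)
    also have "\<dots> = (\<Sum>m\<in>UNIV. \<Sum>k\<in>UNIV. HV k * vxx m k * HL m)" by (rule sum.swap)
    also have "\<dots> = T" unfolding T_def by (simp add: sum_distrib_left mult_ac Vs)
    finally show ?thesis .
  qed
  have F6: "(\<Sum>k\<in>UNIV. HV k * dLHV k) = T + W"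
  proof -
    have "(\<Sum>k\<in>UNIV. HV k * dLHV k) = (\<Sum>k\<in>UNIV. HV k * (\<Sum>m\<in>UNIV. vxx m k * HL m)) + W"
      unfolding ddLHV W_def by (simp add: sum.distrib distrib_left)
    then show ?thesis using T' by simp
  qed
  have G: "(\<Sum>m\<in>UNIV. vx m * dHVm m k) = Q k + (\<Sum>j\<in>UNIV. HV j * vxx j k)" for k
  proof -
    have "(\<Sum>m\<in>UNIV. vx m * dHVm m k) = (\<Sum>m\<in>UNIV. \<Sum>j\<in>UNIV. vx m * (hx j m k * vx j)) + (\<Sum>m\<in>UNIV. \<Sum>j\<in>UNIV. vx m * (H j m * vxx j k))"
      by (simp add: ddHV sum_distrib_left distrib_left sum.distrib)
    also have "\<dots> = (\<Sum>j\<in>UNIV. \<Sum>m\<in>UNIV. vx m * (hx j m k * vx j)) + (\<Sum>j\<in>UNIV. \<Sum>m\<in>UNIV. vx m * (H j m * vxx j k))"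
      using sum.swap[of "\<lambda>m j. vx m * (hx j m k * vx j)" UNIV UNIV] sum.swap[of "\<lambda>m j. vx m * (H j m * vxx j k)" UNIV UNIV]
      by simp
    also have "\<dots> = Q k + (\<Sum>j\<in>UNIV. HV j * vxx j k)"
      unfolding Q_def dHV by (simp add: sum_distrib_left sum_distrib_right mult_ac Hs)
    finally show ?thesis .
  qed
  have F7: "(\<Sum>k\<in>UNIV. HL k * dVHV k) = 2 * T + HLQ"
  proof -
    have "(\<Sum>k\<in>UNIV. HL k * dVHV k) = (\<Sum>k\<in>UNIV. HL k * (\<Sum>m\<in>UNIV. HV m * vxx m k)) + (\<Sum>k\<in>UNIV. HL k * (Q k + (\<Sum>j\<in>UNIV. HV j * vxx j k)))"
      unfolding ddVHV G[symmetric] by (simp add: sum.distrib distrib_left mult.commute)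
    then show ?thesis unfolding T_def HLQ_def by (simp add: sum.distrib distrib_left)
  qed
  have F8: "dtVHV = 2 * VTX" "dsVHV = 2 * VSX"
    unfolding dtV dsV VTX_def VSX_def by (simp_all add: sum.distrib bilH[symmetric])
  have c1: "(\<Sum>m\<in>UNIV. vtx m * HL m) = VTL" "(\<Sum>m\<in>UNIV. vsx m * HL m) = VSL"
    unfolding VTL_def VSL_def by (simp_all add: mult.commute)
  have F9: "dtLHV = VTL + LTX" "dsLHV = VSL + LSX"
    unfolding dtL dsL LTX_def LSX_def bilH by (simp_all add: sum.distrib c1)
  have sw2: "(\<Sum>j\<in>UNIV. \<Sum>k\<in>UNIV. H j k * y j * vx k) = (\<Sum>k\<in>UNIV. y k * HV k)" for y
  proof -
    have "(\<Sum>j\<in>UNIV. \<Sum>k\<in>UNIV. H j k * y j * vx k) = (\<Sum>k\<in>UNIV. \<Sum>j\<in>UNIV. H j k * y j * vx k)" by (rule sum.swap)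
    also have "\<dots> = (\<Sum>k\<in>UNIV. vx k * (\<Sum>j\<in>UNIV. H j k * y j))" by (simp add: sum_distrib_left mult_ac)
    finally show ?thesis using bilH[of y] by simp
  qed
  have F10: "Rt = vt * LTX" "Rs = vs * LSX" "Rp = vv * PX"
  proof -
    have "Rt = (\<Sum>j\<in>UNIV. \<Sum>k\<in>UNIV. H j k * ltx j * vx k) * vt" unfolding dRt by (simp add: sum_distrib_right)
    then show "Rt = vt * LTX" using sw2[of ltx] unfolding LTX_def by simp
    have "Rs = (\<Sum>j\<in>UNIV. \<Sum>k\<in>UNIV. H j k * lsx j * vx k) * vs" unfolding dRs by (simp add: sum_distrib_right)
    then show "Rs = vs * LSX" using sw2[of lsx] unfolding LSX_def by simp
    have "Rp = vv * (\<Sum>j\<in>UNIV. \<Sum>k\<in>UNIV. H j k * psx j * vx k)" unfolding dRp by (simp add: sum_distrib_left mult_ac)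
    then show "Rp = vv * PX" using sw2[of psx] unfolding PX_def by simp
  qed
  have F12: "bs = AX + a * S2"
  proof -
    have "bs = (\<Sum>j\<in>UNIV. \<Sum>k\<in>UNIV. ax k * H j k * lx j) + a * (\<Sum>j\<in>UNIV. \<Sum>k\<in>UNIV. hx j k k * lx j + H j k * lxx j k)"
      unfolding dbs by (simp add: sum.distrib sum_distrib_left algebra_simps)
    also have "\<dots> = (\<Sum>k\<in>UNIV. \<Sum>j\<in>UNIV. ax k * H j k * lx j) + a * S2"
      using sum.swap[of "\<lambda>j k. ax k * H j k * lx j" UNIV UNIV] F3 dhl by simp
    also have "\<dots> = AX + a * S2" unfolding AX_def dHL by (simp add: sum_distrib_left mult_ac)
    finally show ?thesis .
  qed
  have swap3: "(\<Sum>a\<in>UNIV. \<Sum>b\<in>UNIV. \<Sum>c\<in>UNIV. f a b c) = (\<Sum>c\<in>UNIV. \<Sum>b\<in>UNIV. \<Sum>a\<in>UNIV. f a b c)"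
    for f :: "'n \<Rightarrow> 'n \<Rightarrow> 'n \<Rightarrow> real"
  proof -
    have "(\<Sum>a\<in>UNIV. \<Sum>b\<in>UNIV. \<Sum>c\<in>UNIV. f a b c) = (\<Sum>a\<in>UNIV. \<Sum>c\<in>UNIV. \<Sum>b\<in>UNIV. f a b c)"
      by (rule sum.cong[OF refl], rule sum.swap)
    also have "\<dots> = (\<Sum>c\<in>UNIV. \<Sum>a\<in>UNIV. \<Sum>b\<in>UNIV. f a b c)" by (rule sum.swap)
    also have "\<dots> = (\<Sum>c\<in>UNIV. \<Sum>b\<in>UNIV. \<Sum>a\<in>UNIV. f a b c)"
      by (rule sum.cong[OF refl], rule sum.swap)
    finally show ?thesis .
  qed
  have swap3b: "(\<Sum>a\<in>UNIV. \<Sum>b\<in>UNIV. \<Sum>c\<in>UNIV. f a b c) = (\<Sum>c\<in>UNIV. \<Sum>a\<in>UNIV. \<Sum>b\<in>UNIV. f a b c)"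
    for f :: "'n \<Rightarrow> 'n \<Rightarrow> 'n \<Rightarrow> real"
  proof -
    have "(\<Sum>a\<in>UNIV. \<Sum>b\<in>UNIV. \<Sum>c\<in>UNIV. f a b c) = (\<Sum>a\<in>UNIV. \<Sum>c\<in>UNIV. \<Sum>b\<in>UNIV. f a b c)"
      by (rule sum.cong[OF refl], rule sum.swap)
    also have "\<dots> = (\<Sum>c\<in>UNIV. \<Sum>a\<in>UNIV. \<Sum>b\<in>UNIV. f a b c)" by (rule sum.swap)
    finally show ?thesis .
  qed
  have C1: "(\<Sum>j'\<in>UNIV. \<Sum>k'\<in>UNIV. 2 * H j k' * (hx j' k k' * lx j' + H j' k * lxx j' k') - ((hx j k k' * H j' k' + H j k * hx j' k' k') * lx j' + H j k * H j' k' * lxx j' k'))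
     = 2 * (\<Sum>k'\<in>UNIV. H j k' * dHLm k k') - (\<Sum>k'\<in>UNIV. hx j k k' * HL k') - H j k * S2" for j k
  proof -
    have "(\<Sum>j'\<in>UNIV. \<Sum>k'\<in>UNIV. 2 * H j k' * (hx j' k k' * lx j' + H j' k * lxx j' k') - ((hx j k k' * H j' k' + H j k * hx j' k' k') * lx j' + H j k * H j' k' * lxx j' k'))
      = (\<Sum>j'\<in>UNIV. \<Sum>k'\<in>UNIV. 2 * (H j k' * (hx j' k k' * lx j' + H j' k * lxx j' k')) - hx j k k' * (H j' k' * lx j') - H j k * (hx j' k' k' * lx j' + H j' k' * lxx j' k'))"
      by (intro sum.cong refl) (simp add: algebra_simps)
    also have "\<dots> = (\<Sum>j'\<in>UNIV. \<Sum>k'\<in>UNIV. 2 * (H j k' * (hx j' k k' * lx j' + H j' k * lxx j' k')))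
        - (\<Sum>j'\<in>UNIV. \<Sum>k'\<in>UNIV. hx j k k' * (H j' k' * lx j'))
        - (\<Sum>j'\<in>UNIV. \<Sum>k'\<in>UNIV. H j k * (hx j' k' k' * lx j' + H j' k' * lxx j' k'))"
      by (simp only: sum_subtractf)
    also have "\<dots> = (\<Sum>k'\<in>UNIV. \<Sum>j'\<in>UNIV. 2 * (H j k' * (hx j' k k' * lx j' + H j' k * lxx j' k')))
        - (\<Sum>k'\<in>UNIV. \<Sum>j'\<in>UNIV. hx j k k' * (H j' k' * lx j'))
        - (\<Sum>k'\<in>UNIV. \<Sum>j'\<in>UNIV. H j k * (hx j' k' k' * lx j' + H j' k' * lxx j' k'))"
      using sum.swap[of "\<lambda>j' k'. 2 * (H j k' * (hx j' k k' * lx j' + H j' k * lxx j' k'))" UNIV UNIV]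
        sum.swap[of "\<lambda>j' k'. hx j k k' * (H j' k' * lx j')" UNIV UNIV]
        sum.swap[of "\<lambda>j' k'. H j k * (hx j' k' k' * lx j' + H j' k' * lxx j' k')" UNIV UNIV]
      by simp
    also have "\<dots> = 2 * (\<Sum>k'\<in>UNIV. H j k' * dHLm k k') - (\<Sum>k'\<in>UNIV. hx j k k' * HL k') - H j k * S2"
      unfolding ddHL dHL S2_def by (simp only: sum_distrib_left)
    finally show ?thesis .
  qed
  have P1: "(\<Sum>j\<in>UNIV. \<Sum>k\<in>UNIV. (\<Sum>k'\<in>UNIV. H j k' * dHLm k k') * vx j * vx k) = W"
  proof -
    have "(\<Sum>j\<in>UNIV. \<Sum>k\<in>UNIV. (\<Sum>k'\<in>UNIV. H j k' * dHLm k k') * vx j * vx k)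
       = (\<Sum>j\<in>UNIV. \<Sum>k\<in>UNIV. \<Sum>k'\<in>UNIV. H j k' * dHLm k k' * vx j * vx k)"
      by (simp add: sum_distrib_right)
    also have "\<dots> = (\<Sum>k'\<in>UNIV. \<Sum>k\<in>UNIV. \<Sum>j\<in>UNIV. H j k' * dHLm k k' * vx j * vx k)" by (rule swap3)
    also have "\<dots> = W" unfolding W_def dHV by (simp add: sum_distrib_left sum_distrib_right mult_ac)
    finally show ?thesis .
  qed
  have P2: "(\<Sum>j\<in>UNIV. \<Sum>k\<in>UNIV. (\<Sum>k'\<in>UNIV. hx j k k' * HL k') * vx j * vx k) = HLQ"
  proof -
    have "(\<Sum>j\<in>UNIV. \<Sum>k\<in>UNIV. (\<Sum>k'\<in>UNIV. hx j k k' * HL k') * vx j * vx k)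
       = (\<Sum>j\<in>UNIV. \<Sum>k\<in>UNIV. \<Sum>k'\<in>UNIV. hx j k k' * HL k' * vx j * vx k)"
      by (simp add: sum_distrib_right)
    also have "\<dots> = (\<Sum>k'\<in>UNIV. \<Sum>j\<in>UNIV. \<Sum>k\<in>UNIV. hx j k k' * HL k' * vx j * vx k)" by (rule swap3b)
    also have "\<dots> = HLQ" unfolding HLQ_def Q_def by (simp add: sum_distrib_left mult_ac)
    finally show ?thesis .
  qed
  have P3: "(\<Sum>j\<in>UNIV. \<Sum>k\<in>UNIV. H j k * vx j * vx k) = VHV"
  proof -
    have "(\<Sum>j\<in>UNIV. \<Sum>k\<in>UNIV. H j k * vx j * vx k) = (\<Sum>k\<in>UNIV. \<Sum>j\<in>UNIV. H j k * vx j * vx k)" by (rule sum.swap)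
    also have "\<dots> = VHV" unfolding dVHV dHV by (simp add: sum_distrib_left mult_ac)
    finally show ?thesis .
  qed
  have F11: "ccsum = 2 * W - HLQ - S2 * VHV + VHV * (ltt + lss - ps)"
  proof -
    have "ccsum = (\<Sum>j\<in>UNIV. \<Sum>k\<in>UNIV. (2 * (\<Sum>k'\<in>UNIV. H j k' * dHLm k k') - (\<Sum>k'\<in>UNIV. hx j k k' * HL k') - H j k * S2 + H j k * (ltt + lss - ps)) * vx j * vx k)"
      unfolding dcc C1 ..
    also have "\<dots> = 2 * (\<Sum>j\<in>UNIV. \<Sum>k\<in>UNIV. (\<Sum>k'\<in>UNIV. H j k' * dHLm k k') * vx j * vx k)
       - (\<Sum>j\<in>UNIV. \<Sum>k\<in>UNIV. (\<Sum>k'\<in>UNIV. hx j k k' * HL k') * vx j * vx k)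
       - S2 * (\<Sum>j\<in>UNIV. \<Sum>k\<in>UNIV. H j k * vx j * vx k) + (ltt + lss - ps) * (\<Sum>j\<in>UNIV. \<Sum>k\<in>UNIV. H j k * vx j * vx k)"
      by (simp add: sum.distrib sum_subtractf sum_distrib_left algebra_simps)
    finally show ?thesis using P1 P2 P3 by (simp add: algebra_simps)
  qed
  have FDV: "(\<Sum>k\<in>UNIV. 2 * (dHVm k k * LHV) + 2 * (HV k * dLHV k) + a * (vv)\<^sup>2 * dHLm k k + (vv)\<^sup>2 * (HL k * ax k) + 2 * a * vv * (HL k * vx k) - vv * (psx k * HV k) - ps * (vx k * HV k) - ps * vv * dHVm k k - VHV * dHLm k k - HL k * dVHV k - 2 * vt * (ltx k * HV k) - 2 * lt * (vtx k * HV k) - 2 * vs * (lsx k * HV k) - 2 * ls * (vsx k * HV k) - 2 * (lt * vt + ls * vs) * dHVm k k + ((vt)\<^sup>2 + (vs)\<^sup>2) * dHLm k k + 2 * vt * (HL k * vtx k) + 2 * vs * (HL k * vsx k)) = 2 * (S1 * LHV) + 2 * (T + W) + a * (vv)\<^sup>2 * S2 + (vv)\<^sup>2 * AX + 2 * a * vv * LHV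
     - vv * PX - ps * VHV - ps * vv * S1 - VHV * S2 - (2 * T + HLQ)
     - 2 * vt * LTX - 2 * lt * VTX - 2 * vs * LSX - 2 * ls * VSX
     - 2 * (lt * vt + ls * vs) * S1 + ((vt)\<^sup>2 + (vs)\<^sup>2) * S2 + 2 * vt * VTL + 2 * vs * VSL"
    unfolding F4[symmetric] F5[symmetric] F6[symmetric] F7[symmetric] S1_def S2_def AX_def PX_def LTX_def VTX_def LSX_def VSX_def VTL_def VSL_def
    by (simp only: sum.distrib sum_subtractf sum_distrib_left[symmetric] sum_distrib_right[symmetric])
  show ?thesis
    unfolding FDV F1 F2 F3 F8 F9 F10 F11 F12 by (simp add: algebra_simps power2_eq_square)
qed




lemma basis_t: "((1::real), (0::real), (0::real^'n::finite)) \<in> Basis"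
  by (simp add: Basis_prod_def zero_prod_def)
lemma basis_s: "((0::real), (1::real), (0::real^'n::finite)) \<in> Basis"
  by (simp add: Basis_prod_def zero_prod_def)
lemma basis_x: "((0::real), (0::real), axis j (1::real) :: real^'n::finite) \<in> Basis"
  by (simp add: Basis_prod_def zero_prod_def)

lemma lift_pd_t: "pd (lift g) (1, 0, 0) q = 0"
  by (cases q) (simp add: pd_def lift_def)
lemma lift_pd_s: "pd (lift g) (0, 1, 0) q = 0"
  by (cases q) (simp add: pd_def lift_def)
lemma lift_pd_x: "pd (lift g) (0, 0, e) q = pd g e (snd (snd q))"
  by (cases q) (simp add: pd_def lift_def)
lemma lift_pd_x_fun: "pd (lift g) (0, 0, e) = lift (pd g e)"
  by (rule ext) (simp add: lift_pd_x lift_def)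

lemma lift_diff:
  fixes q :: "'n::finite pt"
  assumes "g differentiable (at (snd (snd q)))"
  shows "lift g differentiable (at q)"
proof -
  have "(\<lambda>q::'n pt. snd (snd q)) differentiable (at q)"
    using bounded_linear_imp_differentiable[OF bounded_linear_compose[OF bounded_linear_snd bounded_linear_snd]]
    unfolding o_def by blast
  then have "(\<lambda>q. g (snd (snd q))) differentiable (at q)"
    using differentiable_compose[of g "\<lambda>q. snd (snd q)"] assms by blast
  then show ?thesis unfolding lift_def[abs_def] .
qed

lemma diff_exp:
  fixes f :: "'a::real_normed_vector \<Rightarrow> real"
  assumes "f differentiable (at q)"
  shows "(\<lambda>q. exp (f q)) differentiable (at q)"
proof -
  obtain F where F: "(f has_derivative F) (at q)"
    using assms unfolding differentiable_def by blast
  have "((\<lambda>q. exp (f q)) has_derivative (\<lambda>h. exp (f q) * F h)) (at q)"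
    using has_derivative_compose[OF F DERIV_exp[THEN has_field_derivative_imp_has_derivative]]
    by (simp add: o_def mult.commute)
  then show ?thesis unfolding differentiable_def by blast
qed

lemma Ck_mono: "Ck_on (Suc k) S f \<Longrightarrow> Ck_on k S f"
proof (induction k arbitrary: f)
  case 0
  then have "\<forall>p\<in>S. f differentiable (at p)" by simp
  then have "\<forall>p\<in>S. isCont f p" using differentiable_imp_continuous_within by blast
  then show ?case by (simp add: continuous_at_imp_continuous_on)
next
  case (Suc k)
  then show ?case by auto
qed




lemma thetaPu:
  fixes H uxx lxx vxx :: "'n::finite \<Rightarrow> 'n \<Rightarrow> real" and hx :: "'n \<Rightarrow> 'n \<Rightarrow> 'n \<Rightarrow> real"
    and ux lx vx :: "'n \<Rightarrow> real"
    and E uu ut us utt uss lt ls ltt lss ps vv vt vs vtt vss a I1s I2s :: real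
  assumes Hs: "\<And>j k. H j k = H k j" and hs: "\<And>j k m. hx j k m = hx k j m"
    and vv: "vv = E * uu" and vt: "vt = E * (lt * uu + ut)" and vs: "vs = E * (ls * uu + us)"
    and vtt: "vtt = E * (lt * (lt * uu + ut) + (ltt * uu + lt * ut + utt))"
    and vss: "vss = E * (ls * (ls * uu + us) + (lss * uu + ls * us + uss))"
    and vx: "\<And>j. vx j = E * (lx j * uu + ux j)"
    and vxx: "\<And>j k. vxx j k = E * (lx k * (lx j * uu + ux j) + (lxx j k * uu + lx j * ux k + uxx j k))"
    and a: "a = (\<Sum>j\<in>UNIV. \<Sum>k\<in>UNIV. H j k * lx j * lx k - hx j k j * lx k - H j k * lxx j k)
               - lt\<^sup>2 - ls\<^sup>2 + ltt + lss - ps"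
    and I1s: "I1s = (\<Sum>j\<in>UNIV. \<Sum>k\<in>UNIV. hx j k k * vx j + H j k * vxx j k)"
    and I2s: "I2s = (\<Sum>j\<in>UNIV. \<Sum>k\<in>UNIV. H j k * lx j * vx k)"
  shows "E * (utt + uss - (\<Sum>j\<in>UNIV. \<Sum>k\<in>UNIV. hx j k k * ux j + H j k * uxx j k))
    = (vtt + vss - I1s - a * vv) + (- 2 * lt * vt - 2 * ls * vs + 2 * I2s - ps * vv)"
proof -
  define P1 where "P1 = (\<Sum>j\<in>UNIV. \<Sum>k\<in>UNIV. hx j k k * ux j)"
  define P2 where "P2 = (\<Sum>j\<in>UNIV. \<Sum>k\<in>UNIV. H j k * uxx j k)"
  define Q1 where "Q1 = (\<Sum>j\<in>UNIV. \<Sum>k\<in>UNIV. hx j k k * lx j)"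
  define Q1' where "Q1' = (\<Sum>j\<in>UNIV. \<Sum>k\<in>UNIV. hx j k j * lx k)"
  define Q2 where "Q2 = (\<Sum>j\<in>UNIV. \<Sum>k\<in>UNIV. H j k * lx j * lx k)"
  define Q3 where "Q3 = (\<Sum>j\<in>UNIV. \<Sum>k\<in>UNIV. H j k * lxx j k)"
  define Q4 where "Q4 = (\<Sum>j\<in>UNIV. \<Sum>k\<in>UNIV. H j k * lx j * ux k)"
  define Q4' where "Q4' = (\<Sum>j\<in>UNIV. \<Sum>k\<in>UNIV. H j k * lx k * ux j)"
  have eI1: "I1s = E * uu * Q1 + E * P1 + E * uu * Q2 + E * Q4' + E * uu * Q3 + E * Q4 + E * P2"
  proof -
    have "I1s = (\<Sum>j\<in>UNIV. \<Sum>k\<in>UNIV. E * uu * (hx j k k * lx j) + E * (hx j k k * ux j)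
       + E * uu * (H j k * lx j * lx k) + E * (H j k * lx k * ux j) + E * uu * (H j k * lxx j k)
       + E * (H j k * lx j * ux k) + E * (H j k * uxx j k))"
      unfolding I1s by (intro sum.cong refl) (simp add: vx vxx algebra_simps)
    then show ?thesis unfolding P1_def P2_def Q1_def Q2_def Q3_def Q4_def Q4'_def
      by (simp only: sum.distrib sum_distrib_left[symmetric])
  qed
  have eI2: "I2s = E * uu * Q2 + E * Q4"
  proof -
    have "I2s = (\<Sum>j\<in>UNIV. \<Sum>k\<in>UNIV. E * uu * (H j k * lx j * lx k) + E * (H j k * lx j * ux k))"
      unfolding I2s by (intro sum.cong refl) (simp add: vx algebra_simps)
    then show ?thesis unfolding Q2_def Q4_def
      by (simp only: sum.distrib sum_distrib_left[symmetric])
  qed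
  have ea: "a = Q2 - Q1' - Q3 - lt\<^sup>2 - ls\<^sup>2 + ltt + lss - ps"
    unfolding a Q2_def Q1'_def Q3_def by (simp only: sum_subtractf)
  have s1: "Q1' = Q1"
  proof -
    have "Q1' = (\<Sum>k\<in>UNIV. \<Sum>j\<in>UNIV. hx j k j * lx k)" unfolding Q1'_def by (rule sum.swap)
    also have "\<dots> = Q1" unfolding Q1_def by (simp add: hs)
    finally show ?thesis .
  qed
  have s2: "Q4' = Q4"
  proof -
    have "Q4' = (\<Sum>k\<in>UNIV. \<Sum>j\<in>UNIV. H j k * lx k * ux j)" unfolding Q4'_def by (rule sum.swap)
    also have "\<dots> = Q4" unfolding Q4_def by (simp add: Hs)
    finally show ?thesis .
  qed
  have eP: "(\<Sum>j\<in>UNIV. \<Sum>k\<in>UNIV. hx j k k * ux j + H j k * uxx j k) = P1 + P2"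
    unfolding P1_def P2_def by (simp only: sum.distrib)
  show ?thesis unfolding eP eI1 eI2 ea s1 s2 vv vt vs vtt vss
    by (simp add: algebra_simps power2_eq_square)
qed




lemma prod3:
  fixes a b :: "'n::finite \<Rightarrow> real" and c :: "'n \<Rightarrow> 'n \<Rightarrow> real"
  shows "(\<Sum>j\<in>UNIV. a j) * (\<Sum>m\<in>UNIV. b m * (\<Sum>i\<in>UNIV. c i m))
     = (\<Sum>j\<in>UNIV. \<Sum>i\<in>UNIV. \<Sum>m\<in>UNIV. a j * c i m * b m)"
proof -
  have "(\<Sum>j\<in>UNIV. a j) * (\<Sum>m\<in>UNIV. b m * (\<Sum>i\<in>UNIV. c i m))
      = (\<Sum>j\<in>UNIV. a j * (\<Sum>m\<in>UNIV. b m * (\<Sum>i\<in>UNIV. c i m)))"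
    by (rule sum_distrib_right)
  also have "\<dots> = (\<Sum>j\<in>UNIV. \<Sum>m\<in>UNIV. \<Sum>i\<in>UNIV. a j * c i m * b m)"
    by (simp only: sum_distrib_left) (simp add: mult_ac)
  also have "\<dots> = (\<Sum>j\<in>UNIV. \<Sum>i\<in>UNIV. \<Sum>m\<in>UNIV. a j * c i m * b m)"
    by (rule sum.cong[OF refl], rule sum.swap)
  finally show ?thesis .
qed

lemma quad2:
  fixes H :: "'n::finite \<Rightarrow> 'n \<Rightarrow> real" and y z :: "'n \<Rightarrow> real"
  shows "(\<Sum>j\<in>UNIV. \<Sum>k\<in>UNIV. H j k * y j * z k) = (\<Sum>m\<in>UNIV. z m * (\<Sum>j\<in>UNIV. H j m * y j))"
proof -
  have "(\<Sum>j\<in>UNIV. \<Sum>k\<in>UNIV. H j k * y j * z k) = (\<Sum>k\<in>UNIV. \<Sum>j\<in>UNIV. H j k * y j * z k)"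
    by (rule sum.swap)
  also have "\<dots> = (\<Sum>m\<in>UNIV. z m * (\<Sum>j\<in>UNIV. H j m * y j))"
    by (simp add: sum_distrib_left mult_ac)
  finally show ?thesis .
qed

lemma fieldV_vec:
  "fieldV h \<Psi> l v k = (\<lambda>q.
     2 * (\<Sum>j\<in>UNIV. lift (h j k) q * Dx j v q) * (\<Sum>m\<in>UNIV. Dx m v q * (\<Sum>j\<in>UNIV. lift (h j m) q * Dx j l q))
   + (\<Sum>j\<in>UNIV. lift (h j k) q * Dx j l q) * coefA h \<Psi> l q * (v q)\<^sup>2
   - lift \<Psi> q * v q * (\<Sum>j\<in>UNIV. lift (h j k) q * Dx j v q)
   - (\<Sum>j\<in>UNIV. lift (h j k) q * Dx j l q) * (\<Sum>m\<in>UNIV. Dx m v q * (\<Sum>j\<in>UNIV. lift (h j m) q * Dx j v q))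
   - 2 * (Dt l q * Dt v q + Ds l q * Ds v q) * (\<Sum>j\<in>UNIV. lift (h j k) q * Dx j v q)
   + (\<Sum>j\<in>UNIV. lift (h j k) q * Dx j l q) * ((Dt v q)\<^sup>2 + (Ds v q)\<^sup>2))"
proof (rule ext)
  fix q
  have T1: "(\<Sum>j\<in>UNIV. \<Sum>j'\<in>UNIV. \<Sum>k'\<in>UNIV. lift (h j k) q * lift (h j' k') q * Dx j' l q * Dx j v q * Dx k' v q)
     = (\<Sum>j\<in>UNIV. lift (h j k) q * Dx j v q) * (\<Sum>m\<in>UNIV. Dx m v q * (\<Sum>j\<in>UNIV. lift (h j m) q * Dx j l q))"
    unfolding prod3 by (simp add: mult_ac)
  have T4: "(\<Sum>j\<in>UNIV. \<Sum>j'\<in>UNIV. \<Sum>k'\<in>UNIV. lift (h j k) q * lift (h j' k') q * Dx j l q * Dx j' v q * Dx k' v q)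
     = (\<Sum>j\<in>UNIV. lift (h j k) q * Dx j l q) * (\<Sum>m\<in>UNIV. Dx m v q * (\<Sum>j\<in>UNIV. lift (h j m) q * Dx j v q))"
    unfolding prod3 by (simp add: mult_ac)
  have T2: "(\<Sum>j\<in>UNIV. lift (h j k) q * coefA h \<Psi> l q * Dx j l q * (v q)\<^sup>2)
     = (\<Sum>j\<in>UNIV. lift (h j k) q * Dx j l q) * coefA h \<Psi> l q * (v q)\<^sup>2"
    by (simp only: sum_distrib_right) (simp add: mult_ac)
  have T6: "(\<Sum>j\<in>UNIV. lift (h j k) q * Dx j l q * ((Dt v q)\<^sup>2 + (Ds v q)\<^sup>2))
     = (\<Sum>j\<in>UNIV. lift (h j k) q * Dx j l q) * ((Dt v q)\<^sup>2 + (Ds v q)\<^sup>2)"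
    by (simp add: sum_distrib_right)
  show "fieldV h \<Psi> l v k q = 2 * (\<Sum>j\<in>UNIV. lift (h j k) q * Dx j v q) * (\<Sum>m\<in>UNIV. Dx m v q * (\<Sum>j\<in>UNIV. lift (h j m) q * Dx j l q))
   + (\<Sum>j\<in>UNIV. lift (h j k) q * Dx j l q) * coefA h \<Psi> l q * (v q)\<^sup>2
   - lift \<Psi> q * v q * (\<Sum>j\<in>UNIV. lift (h j k) q * Dx j v q)
   - (\<Sum>j\<in>UNIV. lift (h j k) q * Dx j l q) * (\<Sum>m\<in>UNIV. Dx m v q * (\<Sum>j\<in>UNIV. lift (h j m) q * Dx j v q))
   - 2 * (Dt l q * Dt v q + Ds l q * Ds v q) * (\<Sum>j\<in>UNIV. lift (h j k) q * Dx j v q)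
   + (\<Sum>j\<in>UNIV. lift (h j k) q * Dx j l q) * ((Dt v q)\<^sup>2 + (Ds v q)\<^sup>2)"
    unfolding fieldV_def T1 T2 T4 T6 by (simp add: mult.assoc)
qed

lemma fieldM_vec:
  "fieldM h \<Psi> l v = (\<lambda>q.
     Dt l q * ((Dt v q)\<^sup>2 - (Ds v q)\<^sup>2 + (\<Sum>m\<in>UNIV. Dx m v q * (\<Sum>j\<in>UNIV. lift (h j m) q * Dx j v q)))
   - 2 * ((\<Sum>m\<in>UNIV. Dx m v q * (\<Sum>j\<in>UNIV. lift (h j m) q * Dx j l q)) * Dt v q)
   + 2 * Ds l q * Ds v q * Dt v q + lift \<Psi> q * v q * Dt v q
   - coefA h \<Psi> l q * Dt l q * (v q)\<^sup>2)"
proof (rule ext)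
  fix q
  have "(\<Sum>j\<in>UNIV. \<Sum>k\<in>UNIV. lift (h j k) q * Dx j l q * Dx k v q * Dt v q)
     = (\<Sum>j\<in>UNIV. \<Sum>k\<in>UNIV. lift (h j k) q * Dx j l q * Dx k v q) * Dt v q"
    by (simp add: sum_distrib_right)
  then show "fieldM h \<Psi> l v q = Dt l q * ((Dt v q)\<^sup>2 - (Ds v q)\<^sup>2 + (\<Sum>m\<in>UNIV. Dx m v q * (\<Sum>j\<in>UNIV. lift (h j m) q * Dx j v q)))
   - 2 * ((\<Sum>m\<in>UNIV. Dx m v q * (\<Sum>j\<in>UNIV. lift (h j m) q * Dx j l q)) * Dt v q)
   + 2 * Ds l q * Ds v q * Dt v q + lift \<Psi> q * v q * Dt v q
   - coefA h \<Psi> l q * Dt l q * (v q)\<^sup>2"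
    unfolding fieldM_def quad2 by simp
qed

lemma fieldN_vec:
  "fieldN h \<Psi> l v = (\<lambda>q.
     Ds l q * ((Ds v q)\<^sup>2 - (Dt v q)\<^sup>2 + (\<Sum>m\<in>UNIV. Dx m v q * (\<Sum>j\<in>UNIV. lift (h j m) q * Dx j v q)))
   - 2 * ((\<Sum>m\<in>UNIV. Dx m v q * (\<Sum>j\<in>UNIV. lift (h j m) q * Dx j l q)) * Ds v q)
   + 2 * Dt l q * Ds v q * Dt v q + lift \<Psi> q * v q * Ds v q
   - coefA h \<Psi> l q * Ds l q * (v q)\<^sup>2)"
proof (rule ext)
  fix q
  have "(\<Sum>j\<in>UNIV. \<Sum>k\<in>UNIV. lift (h j k) q * Dx j l q * Dx k v q * Ds v q)
     = (\<Sum>j\<in>UNIV. \<Sum>k\<in>UNIV. lift (h j k) q * Dx j l q * Dx k v q) * Ds v q"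
    by (simp add: sum_distrib_right)
  then show "fieldN h \<Psi> l v q = Ds l q * ((Ds v q)\<^sup>2 - (Dt v q)\<^sup>2 + (\<Sum>m\<in>UNIV. Dx m v q * (\<Sum>j\<in>UNIV. lift (h j m) q * Dx j v q)))
   - 2 * ((\<Sum>m\<in>UNIV. Dx m v q * (\<Sum>j\<in>UNIV. lift (h j m) q * Dx j l q)) * Ds v q)
   + 2 * Dt l q * Ds v q * Dt v q + lift \<Psi> q * v q * Ds v q
   - coefA h \<Psi> l q * Ds l q * (v q)\<^sup>2"
    unfolding fieldN_def quad2 by simp
qed



lemma mainlem:
  fixes \<Omega> :: "(real^'n::finite) set"
    and h :: "'n \<Rightarrow> 'n \<Rightarrow> real^'n \<Rightarrow> real"
    and u l :: "'n pt \<Rightarrow> real"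
    and \<Psi> :: "real^'n \<Rightarrow> real"
    and t s :: real and x :: "real^'n"
    and p :: "'n pt" and \<theta> v :: "'n pt \<Rightarrow> real"
  assumes A1: "open \<Omega>"
    and A2: "\<And>j k. Ck_on 2 \<Omega> (h j k)"
    and A3: "\<And>j k. h j k = h k j"
    and A4: "Ck_on 2 UNIV u"
    and A5: "Ck_on 3 UNIV l"
    and A6: "Ck_on 1 UNIV \<Psi>"
    and A7: "x \<in> \<Omega>"
    and pdef: "p = (t, s, x)" and thdef: "\<theta> = (\<lambda>q. exp (l q))" and vdef: "v = (\<lambda>q. \<theta> q * u q)"
  shows "(\<theta> p)\<^sup>2 * \<bar>Dt (Dt u) p + Ds (Ds u) p
        - (\<Sum>j\<in>UNIV. \<Sum>k\<in>UNIV. Dx k (\<lambda>q. lift (h j k) q * Dx j u q) p)\<bar>\<^sup>2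
     + 2 * (\<Sum>k\<in>UNIV. Dx k (fieldV h \<Psi> l v k) p)
     + 2 * Dt (fieldM h \<Psi> l v) p + 2 * Ds (fieldN h \<Psi> l v) p
   \<ge> 2 * (Dt (Dt l) p - Ds (Ds l) p
          + (\<Sum>j\<in>UNIV. \<Sum>k\<in>UNIV. Dx k (\<lambda>q. lift (h j k) q * Dx j l q) p) + lift \<Psi> p) * (Dt v p)\<^sup>2
     - 8 * (\<Sum>j\<in>UNIV. \<Sum>k\<in>UNIV. lift (h j k) p * Dx j (Dt l) p * Dx k v p * Dt v p)
     + 8 * Ds (Dt l) p * Ds v p * Dt v p
     - 8 * (\<Sum>j\<in>UNIV. \<Sum>k\<in>UNIV. lift (h j k) p * Dx j (Ds l) p * Dx k v p * Ds v p)
     + 2 * (Ds (Ds l) p - Dt (Dt l) p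
          + (\<Sum>j\<in>UNIV. \<Sum>k\<in>UNIV. Dx k (\<lambda>q. lift (h j k) q * Dx j l q) p) + lift \<Psi> p) * (Ds v p)\<^sup>2
     + 2 * (\<Sum>j\<in>UNIV. \<Sum>k\<in>UNIV. coefc h \<Psi> l j k p * Dx j v p * Dx k v p)
     - 2 * (\<Sum>j\<in>UNIV. \<Sum>k\<in>UNIV. lift (h j k) p * Dx j (lift \<Psi>) p * v p * Dx k v p)
     + coefB h \<Psi> l p * (v p)\<^sup>2"
proof -
  define H where "H j k = lift (h j k) p" for j k
  define hx where "hx j k m = Dx m (lift (h j k)) p" for j k m
  define vx where "vx j = Dx j v p" for j
  define vtx where "vtx j = Dx j (Dt v) p" for j
  define vsx where "vsx j = Dx j (Ds v) p" for j
  define vxx where "vxx j k = Dx k (Dx j v) p" for j k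
  define lx where "lx j = Dx j l p" for j
  define ltx where "ltx j = Dx j (Dt l) p" for j
  define lsx where "lsx j = Dx j (Ds l) p" for j
  define lxx where "lxx j k = Dx k (Dx j l) p" for j k
  define ax where "ax k = Dx k (coefA h \<Psi> l) p" for k
  define psx where "psx k = Dx k (lift \<Psi>) p" for k
  define vv where "vv = v p"
  define vt where "vt = Dt v p"
  define vs where "vs = Ds v p"
  define vtt where "vtt = Dt (Dt v) p"
  define vss where "vss = Ds (Ds v) p"
  define vst where "vst = Ds (Dt v) p"
  define lt where "lt = Dt l p"
  define ls where "ls = Ds l p"
  define ltt where "ltt = Dt (Dt l) p"
  define lss where "lss = Ds (Ds l) p"
  define lst where "lst = Ds (Dt l) p"
  define a where "a = coefA h \<Psi> l p"
  define aT where "aT = Dt (coefA h \<Psi> l) p"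
  define aS where "aS = Ds (coefA h \<Psi> l) p"
  define ps where "ps = lift \<Psi> p"
  define HV where "HV k = (\<Sum>j\<in>UNIV. H j k * vx j)" for k
  define HL where "HL k = (\<Sum>j\<in>UNIV. H j k * lx j)" for k
  define dHVm where "dHVm m k = (\<Sum>j\<in>UNIV. hx j m k * vx j + H j m * vxx j k)" for m k
  define dHLm where "dHLm m k = (\<Sum>j\<in>UNIV. hx j m k * lx j + H j m * lxx j k)" for m k
  define LHV where "LHV = (\<Sum>m\<in>UNIV. vx m * HL m)"
  define VHV where "VHV = (\<Sum>m\<in>UNIV. vx m * HV m)"
  define dLHV where "dLHV k = (\<Sum>m\<in>UNIV. vxx m k * HL m + vx m * dHLm m k)" for k
  define dVHV where "dVHV k = (\<Sum>m\<in>UNIV. vxx m k * HV m + vx m * dHVm m k)" for k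
  define dtVHV where "dtVHV = (\<Sum>m\<in>UNIV. vtx m * HV m + vx m * (\<Sum>j\<in>UNIV. H j m * vtx j))"
  define dtLHV where "dtLHV = (\<Sum>m\<in>UNIV. vtx m * HL m + vx m * (\<Sum>j\<in>UNIV. H j m * ltx j))"
  define dsVHV where "dsVHV = (\<Sum>m\<in>UNIV. vsx m * HV m + vx m * (\<Sum>j\<in>UNIV. H j m * vsx j))"
  define dsLHV where "dsLHV = (\<Sum>m\<in>UNIV. vsx m * HL m + vx m * (\<Sum>j\<in>UNIV. H j m * lsx j))"
  define I1s where "I1s = (\<Sum>j\<in>UNIV. (\<Sum>k\<in>UNIV. hx j k k * vx j + H j k * vxx j k))"
  define I2s where "I2s = (\<Sum>j\<in>UNIV. (\<Sum>k\<in>UNIV. H j k * lx j * vx k))"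
  define hl where "hl = (\<Sum>j\<in>UNIV. (\<Sum>k\<in>UNIV. hx j k k * lx j + H j k * lxx j k))"
  define ccsum where "ccsum = (\<Sum>j\<in>UNIV. (\<Sum>k\<in>UNIV. ((\<Sum>j'\<in>UNIV. (\<Sum>k'\<in>UNIV. 2 * H j k' * (hx j' k k' * lx j' + H j' k * lxx j' k') - ((hx j k k' * H j' k' + H j k * hx j' k' k') * lx j' + H j k * H j' k' * lxx j' k'))) + H j k * (ltt + lss - ps)) * vx j * vx k))"
  define bs where "bs = (\<Sum>j\<in>UNIV. (\<Sum>k\<in>UNIV. (ax k * H j k + a * hx j k k) * lx j + a * H j k * lxx j k))"
  define Rt where "Rt = (\<Sum>j\<in>UNIV. (\<Sum>k\<in>UNIV. H j k * ltx j * vx k * vt))"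
  define Rs where "Rs = (\<Sum>j\<in>UNIV. (\<Sum>k\<in>UNIV. H j k * lsx j * vx k * vs))"
  define Rp where "Rp = (\<Sum>j\<in>UNIV. (\<Sum>k\<in>UNIV. H j k * psx j * vv * vx k))"
  have x_eq: "snd (snd p) = x" using pdef by simp
  have A5': "Ck_on (Suc (Suc (Suc 0))) UNIV l" using A5 by (simp add: numeral_3_eq_3)
  have A4': "Ck_on (Suc (Suc 0)) UNIV u" using A4 by (simp add: numeral_2_eq_2)
  have A2': "Ck_on (Suc (Suc 0)) \<Omega> (h j k)" for j k using A2 by (simp add: numeral_2_eq_2)
  have A6': "Ck_on (Suc 0) UNIV \<Psi>" using A6 by simp
  have l0: "l differentiable (at q)" for q using A5' unfolding Ck_on.simps by blast
  have l1: "pd l b differentiable (at q)" if "b \<in> Basis" for b q using A5' that unfolding Ck_on.simps by blast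
  have l2: "pd (pd l b) b' differentiable (at q)" if "b \<in> Basis" "b' \<in> Basis" for b b' q
    using A5' that unfolding Ck_on.simps by blast
  have u0: "u differentiable (at q)" for q using A4' unfolding Ck_on.simps by blast
  have u1: "pd u b differentiable (at q)" if "b \<in> Basis" for b q using A4' that unfolding Ck_on.simps by blast
  have u2: "continuous_on UNIV (pd (pd u b) b')" if "b \<in> Basis" "b' \<in> Basis" for b b'
    using A4' that unfolding Ck_on.simps by blast
  have h0: "h j k differentiable (at x)" for j k using A2'[of j k] A7 unfolding Ck_on.simps by blast
  have h1: "pd (h j k) b differentiable (at x)" if "b \<in> Basis" for j k b
    using A2'[of j k] A7 that unfolding Ck_on.simps by blast
  have P0: "\<Psi> differentiable (at x)" using A6' unfolding Ck_on.simps by blast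
  have l_sw: "pd (pd l b) b' q = pd (pd l b') b q" if "b \<in> Basis" "b' \<in> Basis" for b b' q
    by (rule schwarz[OF l0 l1[OF that(1)] l1[OF that(2)]];
        rule differentiable_imp_continuous_within; rule l2; use that in simp)
  have u_sw: "pd (pd u b) b' q = pd (pd u b') b q" if "b \<in> Basis" "b' \<in> Basis" for b b' q
    using u2[OF that] u2[OF that(2,1)] continuous_on_eq_continuous_at[OF open_UNIV]
    by (intro schwarz[OF u0 u1[OF that(1)] u1[OF that(2)]]) blast+
  have vfun: "v = (\<lambda>q. exp (l q) * u q)" using vdef thdef by simp
  have v0d: "v differentiable (at q)" for q
    unfolding vfun using diff_exp[OF l0[of q]] u0[of q] by simp
  have v1: "pd v b q = exp (l q) * (pd l b q * u q + pd u b q)" for b q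
    unfolding vfun using pd_mult[OF diff_exp[OF l0[of q]] u0[of q]] pd_exp[OF l0[of q]]
    by (simp add: algebra_simps)
  have v1f: "pd v b = (\<lambda>q. exp (l q) * (pd l b q * u q + pd u b q))" for b
    by (rule ext) (rule v1)
  have v1d: "pd v b differentiable (at q)" if "b \<in> Basis" for b q
    unfolding v1f using diff_exp[OF l0[of q]] l1[OF that] u0[of q] u1[OF that] by simp
  have v2: "pd (pd v b) b' q = exp (l q) * (pd l b' q * (pd l b q * u q + pd u b q)
      + (pd (pd l b) b' q * u q + pd l b q * pd u b' q + pd (pd u b) b' q))" if "b \<in> Basis" for b b' q
    unfolding v1f using that
    by (simp add: pd_mult pd_add pd_exp diff_exp l0 l1 u0 u1 algebra_simps)
  have v_sw: "pd (pd v b) b' q = pd (pd v b') b q" if "b \<in> Basis" "b' \<in> Basis" for b b' q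
    unfolding v2[OF that(1)] v2[OF that(2)] l_sw[OF that] u_sw[OF that] by (simp add: algebra_simps)
  have Hd: "lift (h j k) differentiable (at p)" for j k
    by (rule lift_diff) (simp add: x_eq h0)
  have Hxd: "pd (lift (h j k)) (0, 0, axis m 1) differentiable (at p)" for j k m
    unfolding lift_pd_x_fun by (rule lift_diff) (simp add: x_eq h1)
  have Pd: "lift \<Psi> differentiable (at p)"
    by (rule lift_diff) (simp add: x_eq P0)
  have Ad: "coefA h \<Psi> l differentiable (at p)"
    unfolding coefA_def[abs_def] Dx_def Dt_def Ds_def
    by (simp add: Hd Hxd Pd l0 l1 l2 basis_t basis_s basis_x)
  have Hsym: "H j k = H k j" for j k unfolding H_def by (simp add: A3[of j k])
  have Vsym: "vxx j k = vxx k j" for j k unfolding vxx_def Dx_def by (rule v_sw) (simp_all add: basis_x)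
  have swv: "pd (pd v (0,0,axis k 1)) (1,0,0) q = pd (pd v (1,0,0)) (0,0,axis k 1) q"
     "pd (pd v (0,0,axis k 1)) (0,1,0) q = pd (pd v (0,1,0)) (0,0,axis k 1) q"
     "pd (pd v (0,1,0)) (1,0,0) q = pd (pd v (1,0,0)) (0,1,0) q" for k q
    by (rule v_sw; simp add: basis_t basis_s basis_x)+
  have swl: "pd (pd l (0,0,axis k 1)) (1,0,0) q = pd (pd l (1,0,0)) (0,0,axis k 1) q"
     "pd (pd l (0,0,axis k 1)) (0,1,0) q = pd (pd l (0,1,0)) (0,0,axis k 1) q"
     "pd (pd l (0,1,0)) (1,0,0) q = pd (pd l (1,0,0)) (0,1,0) q" for k q
    by (rule l_sw; simp add: basis_t basis_s basis_x)+
  have J: "2 * (vtt + vss - I1s - a * vv) * (- 2 * lt * vt - 2 * ls * vs + 2 * I2s - ps * vv) + 2 * (\<Sum>k\<in>UNIV. 2 * (dHVm k k * LHV) + 2 * (HV k * dLHV k) + a * (vv)\<^sup>2 * dHLm k k + (vv)\<^sup>2 * (HL k * ax k) + 2 * a * vv * (HL k * vx k) - vv * (psx k * HV k) - ps * (vx k * HV k) - ps * vv * dHVm k k - VHV * dHLm k k - HL k * dVHV k - 2 * vt * (ltx k * HV k) - 2 * lt * (vtx k * HV k) - 2 * vs * (lsx k * HV k) - 2 * ls * (vsx k * HV k) - 2 * (lt * vt + ls * vs) * dHVm k k + ((vt)\<^sup>2 + (vs)\<^sup>2) * dHLm k k + 2 * vt * (HL k * vtx k) + 2 * vs * (HL k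 * vsx k)) + 2 * (ltt * ((vt)\<^sup>2 - (vs)\<^sup>2 + VHV) + lt * (2 * vt * vtt - 2 * vs * vst + dtVHV) - 2 * (dtLHV * vt + LHV * vtt) + 2 * (lst * vs * vt + ls * vst * vt + ls * vs * vtt) + ps * (vt * vt + vv * vtt) - (aT * lt * (vv)\<^sup>2 + a * ltt * (vv)\<^sup>2 + a * lt * (2 * vv * vt))) + 2 * (lss * ((vs)\<^sup>2 - (vt)\<^sup>2 + VHV) + ls * (2 * vs * vss - 2 * vt * vst + dsVHV) - 2 * (dsLHV * vs + LHV * vss) + 2 * (lst * vs * vt + lt * vss * vt + lt * vs * vst) + ps * (vs * vs + vv * vss) - (aS * ls * (vv)\<^sup>2 + a * lss * (vv)\<^sup>2 + a * ls * (2 * vv * vs))) = 2 * (ltt - lss + hl + ps) * (vt)\<^sup>2 - 8 * Rt + 8 * lst * vs * vt - 8 * Rs + 2 * (lss - ltt + hl + ps) * (vs)\<^sup>2 + 2 * ccsum - 2 * Rp + (2 * (a * ps - (aT * lt + a * ltt) - (aS * ls + a * lss) + bs)) * (vv)\<^sup>2"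
    by (rule jet0[where H=H and hx=hx and vx=vx and vtx=vtx and vsx=vsx and vxx=vxx and lx=lx and ltx=ltx and lsx=lsx and lxx=lxx and ax=ax and psx=psx and vv=vv and vt=vt and vs=vs and vtt=vtt and vss=vss and vst=vst and lt=lt and ls=ls and ltt=ltt and lss=lss and lst=lst and a=a and aT=aT and aS=aS and ps=ps and HV=HV and HL=HL and dHVm=dHVm and dHLm=dHLm and LHV=LHV and VHV=VHV and dLHV=dLHV and dVHV=dVHV and dtVHV=dtVHV and dtLHV=dtLHV and dsVHV=dsVHV and dsLHV=dsLHV and I1s=I1s and I2s=I2s and hl=hl and ccsum=ccsum and bs=bs and Rt=Rt and Rs=Rs and Rp=Rp, OF Hsym Vsym]) (simp_all add: H_def hx_def vx_def vtx_def vsx_def vxx_def lx_def ltx_def lsx_def lxx_def ax_def psx_def vv_def vt_def vs_def vtt_def vss_def vst_def lt_def ls_def ltt_def lss_def lst_def a_def aT_def aS_def ps_def HV_def HL_def dHVm_def dHLm_def LHV_def VHV_def dLHV_def dVHV_def dtVHV_def dtLHV_def dsVHV_def dsLHV_def I1s_def I2s_def hl_def ccsum_def bs_def Rt_def Rs_def Rp_def)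
  have G_th: "(\<theta> p)\<^sup>2 * \<bar>Dt (Dt u) p + Ds (Ds u) p - (\<Sum>j\<in>UNIV. \<Sum>k\<in>UNIV. Dx k (\<lambda>q. lift (h j k) q * Dx j u q) p)\<bar>\<^sup>2 = ((vtt + vss - I1s - a * vv) + (- 2 * lt * vt - 2 * ls * vs + 2 * I2s - ps * vv))\<^sup>2"
  proof -
    have Pu: "(\<Sum>j\<in>UNIV. \<Sum>k\<in>UNIV. Dx k (\<lambda>q. lift (h j k) q * Dx j u q) p) = (\<Sum>j\<in>UNIV. \<Sum>k\<in>UNIV. hx j k k * Dx j u p + H j k * Dx k (Dx j u) p)"
      unfolding hx_def H_def Dx_def by (simp add: pd_mult Hd u1 basis_x)
    have TP: "\<theta> p * (Dt (Dt u) p + Ds (Ds u) p - (\<Sum>j\<in>UNIV. \<Sum>k\<in>UNIV. hx j k k * Dx j u p + H j k * Dx k (Dx j u) p))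
      = (vtt + vss - I1s - a * vv) + (- 2 * lt * vt - 2 * ls * vs + 2 * I2s - ps * vv)"
      apply (rule thetaPu[where H=H and hx=hx and uxx="\<lambda>j k. Dx k (Dx j u) p" and lxx=lxx and vxx=vxx
          and ux="\<lambda>j. Dx j u p" and lx=lx and vx=vx and E="\<theta> p" and uu="u p" and ut="Dt u p" and us="Ds u p"
          and utt="Dt (Dt u) p" and uss="Ds (Ds u) p" and lt=lt and ls=ls and ltt=ltt and lss=lss and ps=ps
          and vv=vv and vt=vt and vs=vs and vtt=vtt and vss=vss and a=a and I1s=I1s and I2s=I2s])
      subgoal by (rule Hsym)
      subgoal unfolding hx_def by (simp add: A3)
      subgoal unfolding vv_def vfun thdef by simp
      subgoal unfolding vt_def lt_def thdef Dt_def by (rule v1)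
      subgoal unfolding vs_def ls_def thdef Ds_def by (rule v1)
      subgoal unfolding vtt_def lt_def ltt_def thdef Dt_def by (rule v2) (rule basis_t)
      subgoal unfolding vss_def ls_def lss_def thdef Ds_def by (rule v2) (rule basis_s)
      subgoal unfolding vx_def lx_def thdef Dx_def by (rule v1)
      subgoal unfolding vxx_def lx_def lxx_def thdef Dx_def by (rule v2) (rule basis_x)
      subgoal unfolding a_def coefA_def H_def hx_def lx_def lxx_def lt_def ls_def ltt_def lss_def ps_def ..
      subgoal unfolding I1s_def ..
      subgoal unfolding I2s_def ..
      done
    have "(\<theta> p)\<^sup>2 * \<bar>Dt (Dt u) p + Ds (Ds u) p - (\<Sum>j\<in>UNIV. \<Sum>k\<in>UNIV. Dx k (\<lambda>q. lift (h j k) q * Dx j u q) p)\<bar>\<^sup>2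
      = (\<theta> p * (Dt (Dt u) p + Ds (Ds u) p - (\<Sum>j\<in>UNIV. \<Sum>k\<in>UNIV. hx j k k * Dx j u p + H j k * Dx k (Dx j u) p)))\<^sup>2"
      unfolding Pu by (simp add: power_mult_distrib)
    then show ?thesis unfolding TP .
  qed

  have G_DV: "(\<Sum>k\<in>UNIV. Dx k (fieldV h \<Psi> l v k) p) = (\<Sum>k\<in>UNIV. 2 * (dHVm k k * LHV) + 2 * (HV k * dLHV k) + a * (vv)\<^sup>2 * dHLm k k + (vv)\<^sup>2 * (HL k * ax k) + 2 * a * vv * (HL k * vx k) - vv * (psx k * HV k) - ps * (vx k * HV k) - ps * vv * dHVm k k - VHV * dHLm k k - HL k * dVHV k - 2 * vt * (ltx k * HV k) - 2 * lt * (vtx k * HV k) - 2 * vs * (lsx k * HV k) - 2 * ls * (vsx k * HV k) - 2 * (lt * vt + ls * vs) * dHVm k k + ((vt)\<^sup>2 + (vs)\<^sup>2) * dHLm k k + 2 * vt * (HL k * vtx k) + 2 * vs * (HL k * vsx k))"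
    unfolding fieldV_vec dHVm_def LHV_def HV_def dLHV_def dHLm_def HL_def ax_def vx_def psx_def ps_def vv_def VHV_def dVHV_def ltx_def vt_def lt_def vtx_def lsx_def vs_def ls_def vsx_def a_def H_def hx_def vxx_def lx_def lxx_def Dt_def Ds_def Dx_def
    by (intro sum.cong refl) (simp add: pd_mult pd_add pd_diff pd_sum pd_power2 pd_const v0d v1d l0 l1 Hd Pd Ad basis_t basis_s basis_x algebra_simps)
  have G_DM: "Dt (fieldM h \<Psi> l v) p = ltt * ((vt)\<^sup>2 - (vs)\<^sup>2 + VHV) + lt * (2 * vt * vtt - 2 * vs * vst + dtVHV) - 2 * (dtLHV * vt + LHV * vtt) + 2 * (lst * vs * vt + ls * vst * vt + ls * vs * vtt) + ps * (vt * vt + vv * vtt) - (aT * lt * (vv)\<^sup>2 + a * ltt * (vv)\<^sup>2 + a * lt * (2 * vv * vt))"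
    unfolding fieldM_vec ltt_def vt_def vs_def VHV_def lt_def vtt_def vst_def dtVHV_def dtLHV_def LHV_def lst_def ls_def ps_def vv_def aT_def a_def HV_def HL_def vx_def vtx_def H_def lx_def ltx_def Dt_def Ds_def Dx_def
    by (simp add: pd_mult pd_add pd_diff pd_sum pd_power2 pd_const lift_pd_t lift_pd_s swv swl v0d v1d l0 l1 Hd Pd Ad basis_t basis_s basis_x algebra_simps)
  have G_DN: "Ds (fieldN h \<Psi> l v) p = lss * ((vs)\<^sup>2 - (vt)\<^sup>2 + VHV) + ls * (2 * vs * vss - 2 * vt * vst + dsVHV) - 2 * (dsLHV * vs + LHV * vss) + 2 * (lst * vs * vt + lt * vss * vt + lt * vs * vst) + ps * (vs * vs + vv * vss) - (aS * ls * (vv)\<^sup>2 + a * lss * (vv)\<^sup>2 + a * ls * (2 * vv * vs))"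
    unfolding fieldN_vec lss_def vt_def vs_def VHV_def ls_def vss_def vst_def dsVHV_def dsLHV_def LHV_def lst_def lt_def ps_def vv_def aS_def a_def HV_def HL_def vx_def vsx_def H_def lx_def lsx_def Dt_def Ds_def Dx_def
    by (simp add: pd_mult pd_add pd_diff pd_sum pd_power2 pd_const lift_pd_t lift_pd_s swv swl v0d v1d l0 l1 Hd Pd Ad basis_t basis_s basis_x algebra_simps)
  have G_hl: "(\<Sum>j\<in>UNIV. \<Sum>k\<in>UNIV. Dx k (\<lambda>q. lift (h j k) q * Dx j l q) p) = hl"
    unfolding hl_def hx_def lx_def H_def lxx_def Dx_def by (simp add: pd_mult Hd l1 basis_x)
  have G_B: "coefB h \<Psi> l p = (2 * (a * ps - (aT * lt + a * ltt) - (aS * ls + a * lss) + bs))"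
    unfolding coefB_def bs_def a_def aT_def aS_def ps_def lt_def ltt_def ls_def lss_def ax_def H_def lx_def hx_def lxx_def Dx_def Dt_def Ds_def
    by (simp add: pd_mult Hd Ad l1 basis_x basis_t basis_s)
  have G_cc: "(\<Sum>j\<in>UNIV. \<Sum>k\<in>UNIV. coefc h \<Psi> l j k p * vx j * vx k) = ccsum"
    unfolding ccsum_def coefc_def H_def lx_def hx_def lxx_def ltt_def lss_def ps_def Dx_def Dt_def Ds_def
    by (simp add: pd_mult Hd l1 basis_x)
  have sq: "((vtt + vss - I1s - a * vv) + (- 2 * lt * vt - 2 * ls * vs + 2 * I2s - ps * vv))\<^sup>2 = ((vtt + vss - I1s - a * vv))\<^sup>2 + 2 * (vtt + vss - I1s - a * vv) * (- 2 * lt * vt - 2 * ls * vs + 2 * I2s - ps * vv) + ((- 2 * lt * vt - 2 * ls * vs + 2 * I2s - ps * vv))\<^sup>2" by (simp add: power2_sum)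
  show ?thesis
    unfolding G_th G_DV G_DM G_DN G_hl G_B
    unfolding H_def[symmetric] hx_def[symmetric] vx_def[symmetric] vtx_def[symmetric] vsx_def[symmetric] vxx_def[symmetric] lx_def[symmetric] ltx_def[symmetric] lsx_def[symmetric] lxx_def[symmetric] ax_def[symmetric] psx_def[symmetric] vv_def[symmetric] vt_def[symmetric] vs_def[symmetric] vtt_def[symmetric] vss_def[symmetric] vst_def[symmetric] lt_def[symmetric] ls_def[symmetric] ltt_def[symmetric] lss_def[symmetric] lst_def[symmetric] a_def[symmetric] aT_def[symmetric] aS_def[symmetric] ps_def[symmetric]
    unfolding G_cc Rt_def[symmetric] Rs_def[symmetric] Rp_def[symmetric]
    using J sq zero_le_power2[of "(vtt + vss - I1s - a * vv)"] zero_le_power2[of "(- 2 * lt * vt - 2 * ls * vs + 2 * I2s - ps * vv)"] by linarith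
qed


theorem corollary3p1:
  fixes \<Omega> :: "(real^'n::finite) set"
    and h :: "'n \<Rightarrow> 'n \<Rightarrow> real^'n \<Rightarrow> real"
    and u l :: "'n pt \<Rightarrow> real"
    and \<Psi> :: "real^'n \<Rightarrow> real"
    and t s :: real and x :: "real^'n"
  assumes "open \<Omega>"
    and "\<And>j k. Ck_on 2 \<Omega> (h j k)"
    and "\<And>j k. h j k = h k j"
    and "Ck_on 2 UNIV u"
    and "Ck_on 3 UNIV l"
    and "Ck_on 1 UNIV \<Psi>"
    and "x \<in> \<Omega>"
  shows "let p = (t, s, x); \<theta> = (\<lambda>q. exp (l q)); v = (\<lambda>q. \<theta> q * u q) in
     (\<theta> p)\<^sup>2 * \<bar>Dt (Dt u) p + Ds (Ds u) p
        - (\<Sum>j\<in>UNIV. \<Sum>k\<in>UNIV. Dx k (\<lambda>q. lift (h j k) q * Dx j u q) p)\<bar>\<^sup>2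
     + 2 * (\<Sum>k\<in>UNIV. Dx k (fieldV h \<Psi> l v k) p)
     + 2 * Dt (fieldM h \<Psi> l v) p + 2 * Ds (fieldN h \<Psi> l v) p
   \<ge> 2 * (Dt (Dt l) p - Ds (Ds l) p
          + (\<Sum>j\<in>UNIV. \<Sum>k\<in>UNIV. Dx k (\<lambda>q. lift (h j k) q * Dx j l q) p) + lift \<Psi> p) * (Dt v p)\<^sup>2
     - 8 * (\<Sum>j\<in>UNIV. \<Sum>k\<in>UNIV. lift (h j k) p * Dx j (Dt l) p * Dx k v p * Dt v p)
     + 8 * Ds (Dt l) p * Ds v p * Dt v p
     - 8 * (\<Sum>j\<in>UNIV. \<Sum>k\<in>UNIV. lift (h j k) p * Dx j (Ds l) p * Dx k v p * Ds v p)
     + 2 * (Ds (Ds l) p - Dt (Dt l) p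
          + (\<Sum>j\<in>UNIV. \<Sum>k\<in>UNIV. Dx k (\<lambda>q. lift (h j k) q * Dx j l q) p) + lift \<Psi> p) * (Ds v p)\<^sup>2
     + 2 * (\<Sum>j\<in>UNIV. \<Sum>k\<in>UNIV. coefc h \<Psi> l j k p * Dx j v p * Dx k v p)
     - 2 * (\<Sum>j\<in>UNIV. \<Sum>k\<in>UNIV. lift (h j k) p * Dx j (lift \<Psi>) p * v p * Dx k v p)
     + coefB h \<Psi> l p * (v p)\<^sup>2"
proof -
  show ?thesis
    unfolding Let_def
    by (rule mainlem[where p="(t, s, x)" and \<theta>="\<lambda>q. exp (l q)" and v="\<lambda>q. exp (l q) * u q",
          OF assms refl refl refl])
qed

end
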